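(* Let $0<q<1/2$, $p=1-q$, $\lambda=q/p$, and let $z\geq 1$ and $A\geq z$ be integers. In the $A$-Nakamoto double spend strategy (described in the context), let $\mathbf{T}'$ be the time elapsed from the moment the attacker has pre-mined his block (start of the second phase) until the end of the attack cycle. Then $$\frac{\mathbb{E}[\mathbf{T}']}{\tau_0} = \frac{A+1}{p-q}\cdot\frac{1}{1-\lambda^{A+1}} - \frac{p^{z-1}q^z}{(p-q)B(z,z)} + \left(\frac{z}{p} - \frac{2(A+1)}{(p-q)(1-\lambda^{A+1})}\right) I_q(z,z),$$ where $B(a,b)=\int_0^1 t^{a-1}(1-t)^{b-1}\,dt$ and $I_x(a,b)=\frac{1}{B(a,b)}\int_0^x t^{a-1}(1-t)^{b-1}\,dt$.
   Context: Mining model: the attacker has relative hashrate $q$ and the honest miners relative hashrate $p=1-q$; blocks found by the honest miners and by the attacker form independent Poisson processes with rates $p/\tau_0$ and $q/\tau_0$ respectively ($\tau_0>0$); block propagation is instantaneous and difficulty is constant. The recipient requires $z$ confirmations. The $A$-Nakamoto double spend strategy (with one pre-mined block) is: (1) the attacker mines on top of the official chain a block containing a transaction returning the payment funds to himself, restarting on the new tip whenever the honest miners find a block first; (2) once this block is mined (kept secret), he sends the paying transaction to the vendor and keeps mining on his secret fork while honest miners extend the official chain (second phase); (3) the lag is (number of official blocks after the fork point) minus (number of blocks of the secret fork, including the pre-mined one); if the lag reaches $A$ the attacker gives up and the attack fails; (4) if, at a moment when the official chain has added at least $z$ blocks after the vendor transaction was sent, the secret fork is strictly longer than the official chain, the attacker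 publishes it and the attack succeeds; the cycle ends at success or failure. *)

theory Defs
  imports "HOL-Probability.Probability"
begin

definition exp_dist :: "real \<Rightarrow> real measure" where
  "exp_dist l = density lborel (\<lambda>x. ennreal (exponential_density l x))"

text \<open>Poisson process given by its stream of i.i.d. interarrival times:
  number of events in the time interval [0, t].\<close>
definition counting :: "real stream \<Rightarrow> real \<Rightarrow> nat" where
  "counting s t = card {k. (\<Sum>i\<le>k. s !! i) \<le> t}"

text \<open>Time 0 is the moment the attacker
  has pre-mined his block.  h = interarrival times of honest blocks, a = of attacker blocks.
  n = official blocks after the fork point, m = secret fork blocks (including pre-mined one).\<close>
definition attack_over :: "nat \<Rightarrow> nat \<Rightarrow> real stream \<Rightarrow> real stream \<Rightarrow> real \<Rightarrow> bool" where
  "attack_over A z h a t \<longleftrightarrow>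
     (let n = counting h t; m = 1 + counting a t in
        int n - int m \<ge> int A \<or> (n \<ge> z \<and> m > n))"

definition T' :: "nat \<Rightarrow> nat \<Rightarrow> real stream \<times> real stream \<Rightarrow> real" where
  "T' A z \<omega> = Inf {t. 0 \<le> t \<and> attack_over A z (fst \<omega>) (snd \<omega>) t}"

definition mining_space :: "real \<Rightarrow> real \<Rightarrow> (real stream \<times> real stream) measure" where
  "mining_space q tau0 =
     stream_space (exp_dist ((1 - q) / tau0)) \<Otimes>\<^sub>M stream_space (exp_dist (q / tau0))"

definition beta_fn :: "nat \<Rightarrow> nat \<Rightarrow> real" where
  "beta_fn a b = integral {0..1} (\<lambda>t::real. t ^ (a - 1) * (1 - t) ^ (b - 1))"

definition inc_beta :: "real \<Rightarrow> nat \<Rightarrow> nat \<Rightarrow> real" where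
  "inc_beta x a b = integral {0..x} (\<lambda>t::real. t ^ (a - 1) * (1 - t) ^ (b - 1)) / beta_fn a b"

end

theory Submission
  imports Defs
begin

lemma binom_abs1: "real (Suc k) * real ((w + Suc k) choose Suc k) = real (Suc w) * real ((w + Suc k) choose k)"
proof -
  have a: "real ((w + Suc k) choose Suc k) = fact (w + Suc k) / (fact (Suc k) * fact w)"
    by (subst binomial_fact) auto
  have b: "real ((w + Suc k) choose k) = fact (w + Suc k) / (fact k * fact (Suc w))"
    by (subst binomial_fact) (auto simp: Suc_diff_le)
  show ?thesis unfolding a b by (simp add: field_simps del: of_nat_Suc)
qed

definition nbP :: "nat \<Rightarrow> real \<Rightarrow> real" where
  "nbP w x = (\<Sum>k<Suc w. real ((w + k) choose k) * (1 - x) ^ Suc w * x ^ k)"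

definition cst :: "nat \<Rightarrow> real" where
  "cst w = real (Suc w) * real ((w + Suc w) choose w)"

lemma tele:
  "(\<Sum>k<Suc K. real ((w + k) choose k) * (real k * (1 - x) * x ^ (k - 1) - real (Suc w) * x ^ k))
    = - real (Suc w) * real ((w + Suc K) choose K) * x ^ K"
proof (induction K)
  case 0 then show ?case by simp
next
  case (Suc K)
  have e1: "real (Suc K) * real ((w + Suc K) choose Suc K) = real (Suc w) * real ((w + Suc K) choose K)"
    by (rule binom_abs1)
  have e2: "real ((w + Suc (Suc K)) choose Suc K) = real ((w + Suc K) choose K) + real ((w + Suc K) choose Suc K)"
    by simp
  have "(\<Sum>k<Suc (Suc K). real ((w + k) choose k) * (real k * (1 - x) * x ^ (k - 1) - real (Suc w) * x ^ k))
     = - real (Suc w) * real ((w + Suc K) choose K) * x ^ K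
       + real ((w + Suc K) choose Suc K) * (real (Suc K) * (1 - x) * x ^ K - real (Suc w) * x ^ Suc K)"
    using Suc by simp
  also have "\<dots> = - real (Suc w) * real ((w + Suc K) choose K) * x ^ K
       + (real (Suc K) * real ((w + Suc K) choose Suc K)) * (1 - x) * x ^ K
       - real (Suc w) * real ((w + Suc K) choose Suc K) * x ^ Suc K"
    by (simp add: algebra_simps)
  also have "\<dots> = - real (Suc w) * real ((w + Suc (Suc K)) choose Suc K) * x ^ Suc K"
    unfolding e1 e2 by (simp add: algebra_simps)
  finally show ?case .
qed

lemma nbP_deriv: "(nbP w has_real_derivative (- cst w * x ^ w * (1 - x) ^ w)) (at x)"
proof -
  have t: "((\<lambda>x. (1 - x) ^ Suc w * x ^ k) has_real_derivative
      ((1 - x) ^ Suc w * (real k * x ^ (k - 1)) + (real (Suc w) * (1 - x) ^ w * (-1)) * x ^ k)) (at x)" for k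
    by (rule derivative_eq_intros refl | simp)+
  have t2: "((\<lambda>x. c * (1 - x) ^ Suc w * x ^ k) has_real_derivative
      c * ((1 - x) ^ Suc w * (real k * x ^ (k - 1)) + (real (Suc w) * (1 - x) ^ w * (-1)) * x ^ k)) (at x)" for c k
    using DERIV_cmult[OF t, of c] by (simp add: mult.assoc)
  have d: "(nbP w has_real_derivative
     (\<Sum>k<Suc w. real ((w + k) choose k) * ((1 - x) ^ Suc w * (real k * x ^ (k - 1))
        + (real (Suc w) * (1 - x) ^ w * (-1)) * x ^ k))) (at x)"
    unfolding nbP_def by (rule DERIV_sum, rule t2)
  have "(\<Sum>k<Suc w. real ((w + k) choose k) * ((1 - x) ^ Suc w * (real k * x ^ (k - 1))
        + (real (Suc w) * (1 - x) ^ w * (-1)) * x ^ k))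
      = (1 - x) ^ w * (\<Sum>k<Suc w. real ((w + k) choose k) * (real k * (1 - x) * x ^ (k - 1) - real (Suc w) * x ^ k))"
    by (simp add: sum_distrib_left algebra_simps)
  also have "\<dots> = - cst w * x ^ w * (1 - x) ^ w"
    unfolding tele cst_def by (simp add: algebra_simps)
  finally show ?thesis using d by simp
qed

lemma nbP_0: "nbP w 0 = 1"
  unfolding nbP_def by (simp add: zero_power lessThan_Suc_eq_insert_0 sum.reindex)

lemma nbP_1: "nbP w 1 = 0"
  unfolding nbP_def by simp

lemma cst_pos: "cst w > 0"
  unfolding cst_def by simp

lemma beta_int:
  assumes "0 \<le> x"
  shows "((\<lambda>t. t ^ w * (1 - t) ^ w) has_integral ((1 - nbP w x) / cst w)) {0..x}"
proof -
  have "((\<lambda>t. t ^ w * (1 - t) ^ w) has_integral ((- nbP w x / cst w) - (- nbP w 0 / cst w))) {0..x}"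
  proof (rule fundamental_theorem_of_calculus[OF assms])
    fix t :: real
    have "((\<lambda>t. - nbP w t / cst w) has_real_derivative (- (- cst w * t ^ w * (1 - t) ^ w) / cst w)) (at t)"
      by (rule DERIV_cdivide[OF DERIV_minus[OF nbP_deriv]])
    then have "((\<lambda>t. - nbP w t / cst w) has_real_derivative (t ^ w * (1 - t) ^ w)) (at t)"
      using cst_pos[of w] by simp
    then show "((\<lambda>t. - nbP w t / cst w) has_vector_derivative (t ^ w * (1 - t) ^ w)) (at t within {0..x})"
      by (simp add: has_real_derivative_iff_has_vector_derivative[symmetric] has_field_derivative_at_within)
  qed
  then show ?thesis by (simp add: nbP_0 diff_divide_distrib)
qed

lemma beta_fn_eq: "beta_fn (Suc w) (Suc w) = 1 / cst w"
  unfolding beta_fn_def using beta_int[of 1 w] by (simp add: nbP_1 integral_unique)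

lemma inc_beta_eq: "0 \<le> x \<Longrightarrow> inc_beta x (Suc w) (Suc w) = 1 - nbP w x"
  unfolding inc_beta_def beta_fn_eq using beta_int[of x w] cst_pos[of w]
  by (simp add: integral_unique)

lemma nbP_sym: "nbP w x + nbP w (1 - x) = 1"
proof -
  have "\<forall>y. ((\<lambda>y. nbP w y + nbP w (1 - y)) has_real_derivative 0) (at y)"
  proof
    fix y :: real
    have "((\<lambda>y. nbP w y + nbP w (1 - y)) has_real_derivative
        (- cst w * y ^ w * (1 - y) ^ w) + (- cst w * (1 - y) ^ w * (1 - (1 - y)) ^ w) * (0 - 1)) (at y)"
    proof (rule DERIV_add[OF nbP_deriv])
      show "((\<lambda>y. nbP w (1 - y)) has_real_derivative (- cst w * (1 - y) ^ w * (1 - (1 - y)) ^ w) * (0 - 1)) (at y)"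
        by (rule DERIV_chain2[OF nbP_deriv]) (rule derivative_eq_intros refl)+
    qed
    then show "((\<lambda>y. nbP w y + nbP w (1 - y)) has_real_derivative 0) (at y)"
      by (simp add: algebra_simps)
  qed
  from DERIV_isconst_all[OF this, of x 0] show ?thesis by (simp add: nbP_0 nbP_1)
qed

lemma dsum_eq: "(\<Sum>k<Suc w. real ((w + k) choose k) * ((1 - x) ^ Suc w * (real k * x ^ (k - 1))
        + (real (Suc w) * (1 - x) ^ w * (-1)) * x ^ k)) = - cst w * x ^ w * (1 - x) ^ w"
proof -
  have "(\<Sum>k<Suc w. real ((w + k) choose k) * ((1 - x) ^ Suc w * (real k * x ^ (k - 1))
        + (real (Suc w) * (1 - x) ^ w * (-1)) * x ^ k))
      = (1 - x) ^ w * (\<Sum>k<Suc w. real ((w + k) choose k) * (real k * (1 - x) * x ^ (k - 1) - real (Suc w) * x ^ k))"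
    by (simp add: sum_distrib_left algebra_simps)
  also have "\<dots> = - cst w * x ^ w * (1 - x) ^ w"
    unfolding tele cst_def by (simp add: algebra_simps)
  finally show ?thesis .
qed

definition nbT :: "nat \<Rightarrow> real \<Rightarrow> real" where
  "nbT w x = (\<Sum>k<Suc w. real ((w + k) choose k) * (1 - x) ^ Suc w * x ^ k * real k)"

lemma nbT_eq: "(1 - x) * nbT w x = real (Suc w) * x * nbP w x - cst w * x ^ Suc w * (1 - x) ^ Suc w"
proof -
  have tm: "x * (1 - x) * ((1 - x) ^ Suc w * (real k * x ^ (k - 1)) + (real (Suc w) * (1 - x) ^ w * (-1)) * x ^ k)
     = (1 - x) * ((1 - x) ^ Suc w * x ^ k * real k) - real (Suc w) * x * ((1 - x) ^ Suc w * x ^ k)" for k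
    by (cases k) (simp_all add: algebra_simps)
  have "x * (1 - x) * (- cst w * x ^ w * (1 - x) ^ w)
     = (\<Sum>k<Suc w. real ((w + k) choose k) * (x * (1 - x) * ((1 - x) ^ Suc w * (real k * x ^ (k - 1))
        + (real (Suc w) * (1 - x) ^ w * (-1)) * x ^ k)))"
    unfolding dsum_eq[symmetric] sum_distrib_left by (simp only: mult.assoc mult.left_commute)
  also have "\<dots> = (\<Sum>k<Suc w. (1 - x) * (real ((w + k) choose k) * (1 - x) ^ Suc w * x ^ k * real k)
      - real (Suc w) * x * (real ((w + k) choose k) * (1 - x) ^ Suc w * x ^ k))"
    unfolding tm by (intro sum.cong refl) (simp only: algebra_simps)
  also have "\<dots> = (1 - x) * nbT w x - real (Suc w) * x * nbP w x"
    unfolding nbT_def nbP_def sum_subtractf sum_distrib_left ..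
  finally have "x * (1 - x) * (- cst w * x ^ w * (1 - x) ^ w) = (1 - x) * nbT w x - real (Suc w) * x * nbP w x" .
  then show ?thesis by (simp add: algebra_simps)
qed

locale chain =
  fixes p q :: real and A z :: nat
  assumes pq: "p + q = 1" and q_pos: "0 < q" and qp: "q < p" and z1: "1 \<le> z" and zA: "z \<le> A"
begin

lemma p_pos: "0 < p" using q_pos qp by simp

definition stopped :: "nat \<Rightarrow> nat \<Rightarrow> bool" where
  "stopped n m \<longleftrightarrow> int A \<le> int n - int m \<or> (z \<le> n \<and> n < m)"

fun Vk :: "nat \<Rightarrow> nat \<Rightarrow> nat \<Rightarrow> real" where
  "Vk 0 n m = 0"
| "Vk (Suc k) n m = (if stopped n m then 0 else 1 + p * Vk k (Suc n) m + q * Vk k n (Suc m))"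

definition lam :: real where "lam = q / p"

lemma lam_pos: "0 < lam" and lam_less1: "lam < 1"
  using q_pos p_pos qp by (auto simp: lam_def)

definition g :: "nat \<Rightarrow> real" where
  "g i = (real (Suc A) * (1 - lam ^ i) / (1 - lam ^ Suc A) - real i) / (p - q)"

lemma lam_den: "1 - lam ^ Suc A > 0"
  using power_Suc_less_one[OF lam_pos lam_less1, of A] by simp

lemma g_0: "g 0 = 0" and g_N: "g (Suc A) = 0"
  using lam_den by (auto simp: g_def)

lemma lam_rec: "lam ^ Suc j = p * lam ^ Suc (Suc j) + q * lam ^ j"
proof -
  have "p * lam ^ Suc (Suc j) + q * lam ^ j = lam ^ j * (p * lam * lam + q)" by (simp add: algebra_simps)
  also have "p * lam * lam + q = lam"
  proof -
    have "p * lam * lam + q = q * (q + p) / p" unfolding lam_def using p_pos by (simp add: field_simps)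
    then show ?thesis using pq unfolding lam_def by (simp add: add.commute)
  qed
  finally show ?thesis by simp
qed

lemma g_rec: "g (Suc j) = 1 + p * g (Suc (Suc j)) + q * g j"
proof -
  define c where "c = real (Suc A) / (1 - lam ^ Suc A)"
  define h where "h i = c * (1 - lam ^ i) - real i" for i
  have pq0: "p - q \<noteq> 0" using qp by simp
  have gh: "g i = h i / (p - q)" for i unfolding g_def h_def c_def by simp
  have "p * h (Suc (Suc j)) + q * h j = c * (p + q) - c * (p * lam ^ Suc (Suc j) + q * lam ^ j) - ((p + q) * real j + 2 * p)"
    unfolding h_def by (simp add: algebra_simps)
  also have "\<dots> = c - c * lam ^ Suc j - (real j + 2 * p)"
    unfolding lam_rec[symmetric] pq by simp
  finally have "(p - q) + p * h (Suc (Suc j)) + q * h j = h (Suc j)"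
    unfolding h_def using pq by (simp add: algebra_simps)
  moreover have "1 + p * (h (Suc (Suc j)) / (p - q)) + q * (h j / (p - q)) = ((p - q) + p * h (Suc (Suc j)) + q * h j) / (p - q)"
    using pq0 by (simp only: add_divide_distrib times_divide_eq_right divide_self_if if_False)
  ultimately show ?thesis unfolding gh by simp
qed

definition G :: "int \<Rightarrow> real" where "G d = g (nat (d + 1))"

definition Gt :: "int \<Rightarrow> real" where "Gt d = (if 0 \<le> d \<and> d < int A then G d else 0)"

definition Gb :: real where "Gb = (real (Suc A) * 2 / (1 - lam ^ Suc A) + real (Suc A)) / (p - q)"

lemma g_bound: "i \<le> Suc A \<Longrightarrow> \<bar>g i\<bar> \<le> Gb"
proof -
  assume i: "i \<le> Suc A"
  have l: "0 \<le> lam ^ i" "lam ^ i \<le> 1" using lam_pos lam_less1 by (auto simp: power_le_one)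
  have n1: "0 \<le> real (Suc A) * (1 - lam ^ i)" using l by simp
  have n2: "real (Suc A) * (1 - lam ^ i) \<le> real (Suc A) * 2"
    using l by (intro mult_left_mono) auto
  have "0 \<le> real (Suc A) * (1 - lam ^ i) / (1 - lam ^ Suc A)"
    using n1 lam_den by simp
  moreover have "real (Suc A) * (1 - lam ^ i) / (1 - lam ^ Suc A) \<le> real (Suc A) * 2 / (1 - lam ^ Suc A)"
    using n2 lam_den by (simp add: divide_right_mono)
  moreover have "0 \<le> real i" "real i \<le> real (Suc A)" using i by auto
  ultimately have "\<bar>real (Suc A) * (1 - lam ^ i) / (1 - lam ^ Suc A) - real i\<bar> \<le> real (Suc A) * 2 / (1 - lam ^ Suc A) + real (Suc A)"
    by linarith
  then show ?thesis unfolding g_def Gb_def using qp by (simp add: abs_div divide_right_mono)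
qed

lemma Gt_bound: "\<bar>Gt d\<bar> \<le> Gb"
proof -
  have "0 \<le> Gb" using g_bound[of 0] by simp
  then show ?thesis unfolding Gt_def G_def by (auto intro!: g_bound)
qed

definition nb :: "nat \<Rightarrow> nat \<Rightarrow> real" where
  "nb r k = (if r = 0 then (if k = 0 then 1 else 0) else real ((r - 1 + k) choose k))"

lemma nb_0[simp]: "nb r 0 = 1" by (simp add: nb_def)

lemma nb_pascal: "1 \<le> r \<Longrightarrow> nb r (Suc k) = nb (r - 1) (Suc k) + nb r k"
proof (cases "r = 1")
  case True then show ?thesis by (simp add: nb_def)
next
  case False
  assume "1 \<le> r"
  with False obtain r' where r: "r = Suc (Suc r')" by (metis One_nat_def Suc_le_D not0_implies_Suc le_numeral_extra(2) le_zero_eq)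
  show ?thesis unfolding r nb_def by simp
qed

definition U :: "nat \<Rightarrow> int \<Rightarrow> real" where
  "U r s = (\<Sum>k\<le>nat s. nb r k * p ^ r * q ^ k * Gt (s - int k))"

lemma U_neg: "s < 0 \<Longrightarrow> U r s = 0"
  by (simp add: U_def Gt_def)

lemma U_rec: assumes r: "1 \<le> r" shows "U r s = p * U (r - 1) s + q * U r (s - 1)"
proof (cases "s < 0")
  case True then show ?thesis by (simp add: U_neg)
next
  case False
  then obtain n where s: "s = int n" by (metis nonneg_int_cases not_less)
  have pr: "p * p ^ (r - 1) = p ^ r" using r by (simp add: power_eq_if)
  show ?thesis
  proof (cases n)
    case 0
    then show ?thesis using s pr by (simp add: U_def U_neg Gt_def)
  next
    case (Suc n')
    have ns: "nat s = Suc n'" using s Suc by simp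
    have "U r s = nb r 0 * p ^ r * q ^ 0 * Gt (s - int 0) + (\<Sum>k\<le>n'. nb r (Suc k) * p ^ r * q ^ Suc k * Gt (s - int (Suc k)))"
      unfolding U_def ns by (rule sum.atMost_Suc_shift)
    also have "\<dots> = Gt s * p ^ r + (\<Sum>k\<le>n'. nb r (Suc k) * p ^ r * q ^ Suc k * Gt (s - 1 - int k))"
      by (simp add: algebra_simps)
    also have "\<dots> = Gt s * p ^ r + (\<Sum>k\<le>n'. nb (r - 1) (Suc k) * p ^ r * q ^ Suc k * Gt (s - 1 - int k))
          + (\<Sum>k\<le>n'. nb r k * p ^ r * q ^ Suc k * Gt (s - 1 - int k))"
      unfolding nb_pascal[OF r] by (simp add: algebra_simps sum.distrib)
    finally have eq1: "U r s = Gt s * p ^ r + (\<Sum>k\<le>n'. nb (r - 1) (Suc k) * p ^ r * q ^ Suc k * Gt (s - 1 - int k))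
          + (\<Sum>k\<le>n'. nb r k * p ^ r * q ^ Suc k * Gt (s - 1 - int k))" .
    have "p * U (r - 1) s = p * (nb (r - 1) 0 * p ^ (r - 1) * q ^ 0 * Gt (s - int 0) + (\<Sum>k\<le>n'. nb (r - 1) (Suc k) * p ^ (r - 1) * q ^ Suc k * Gt (s - int (Suc k))))"
      unfolding U_def ns by (subst sum.atMost_Suc_shift) simp
    also have "\<dots> = Gt s * p ^ r + (\<Sum>k\<le>n'. nb (r - 1) (Suc k) * p ^ r * q ^ Suc k * Gt (s - 1 - int k))"
      unfolding pr[symmetric] by (simp add: algebra_simps sum_distrib_left)
    finally have eq2: "p * U (r - 1) s = Gt s * p ^ r + (\<Sum>k\<le>n'. nb (r - 1) (Suc k) * p ^ r * q ^ Suc k * Gt (s - 1 - int k))" .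
    have "nat (s - 1) = n'" using s Suc by simp
    then have "q * U r (s - 1) = (\<Sum>k\<le>n'. nb r k * p ^ r * q ^ Suc k * Gt (s - 1 - int k))"
      unfolding U_def by (simp add: algebra_simps sum_distrib_left)
    with eq1 eq2 show ?thesis by simp
  qed
qed


lemma Gb_nonneg: "0 \<le> Gb" using g_bound[of 0] by simp

lemma U_0: "U 0 s = Gt s"
proof (cases "s < 0")
  case True then show ?thesis by (simp add: U_neg Gt_def)
next
  case False
  have "U 0 s = (\<Sum>k\<le>nat s. if k = 0 then Gt s else 0)"
    unfolding U_def by (intro sum.cong refl) (simp add: nb_def)
  then show ?thesis by simp
qed

lemma U_bound: "\<bar>U r s\<bar> \<le> Gb"
proof (induction r arbitrary: s)
  case 0 then show ?case by (simp add: U_0 Gt_bound)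
next
  case (Suc r)
  note IHr = Suc.IH
  have "\<forall>s. s < int n \<longrightarrow> \<bar>U (Suc r) s\<bar> \<le> Gb" for n
  proof (induction n)
    case 0 then show ?case using Gb_nonneg by (auto simp: U_neg)
  next
    case (Suc n)
    show ?case
    proof (intro allI impI)
      fix s assume s: "s < int (Suc n)"
      show "\<bar>U (Suc r) s\<bar> \<le> Gb"
      proof (cases "s < int n")
        case True with Suc.IH show ?thesis by blast
      next
        case False
        then have "s - 1 < int n" using s by simp
        with Suc.IH have a: "\<bar>U (Suc r) (s - 1)\<bar> \<le> Gb" by blast
        have b: "\<bar>U r s\<bar> \<le> Gb" by (rule IHr)
        have "\<bar>U (Suc r) s\<bar> = \<bar>p * U r s + q * U (Suc r) (s - 1)\<bar>" using U_rec[of "Suc r" s] by simp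
        also have "\<dots> \<le> p * \<bar>U r s\<bar> + q * \<bar>U (Suc r) (s - 1)\<bar>"
          using p_pos q_pos by (simp add: abs_triangle_ineq[THEN order_trans] abs_mult)
        also have "\<dots> \<le> p * Gb + q * Gb"
          using a b p_pos q_pos by (intro add_mono mult_left_mono) auto
        also have "\<dots> = Gb" using pq by (simp add: distrib_right[symmetric])
        finally show ?thesis .
      qed
    qed
  qed
  then show ?case by (metis zless_nat_conj lessI of_nat_Suc nat_int add.commute
       int_less_induct linorder_not_le nat_le_iff of_nat_less_iff zle_add1_eq_le) 
qed

definition W :: "nat \<Rightarrow> int \<Rightarrow> real" where
  "W r d = real r / p + U r (d + int r)"

lemma W_0: "W 0 d = Gt d" by (simp add: W_def U_0)

lemma W_rec: assumes r: "1 \<le> r" shows "W r d = 1 + p * W (r - 1) (d + 1) + q * W r (d - 1)"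
proof -
  have u: "U r (d + int r) = p * U (r - 1) (d + 1 + int (r - 1)) + q * U r (d - 1 + int r)"
    using U_rec[OF r, of "d + int r"] r by (simp add: of_nat_diff algebra_simps)
  have "real r / p = 1 + p * (real (r - 1) / p) + q * (real r / p)"
  proof -
    have "p * (real (r - 1) / p) = real r - 1" using p_pos r by (simp add: of_nat_diff)
    moreover have "real r / p = real r + q * (real r / p)"
    proof -
      have "real r / p - q * (real r / p) = (1 - q) * (real r / p)" by (simp only: left_diff_distrib mult_1)
      also have "\<dots> = p * (real r / p)" using pq by (metis add_diff_cancel_right')
      also have "\<dots> = real r" using p_pos by simp
      finally show ?thesis by linarith
    qed
    ultimately show ?thesis by linarith
  qed
  then show ?thesis unfolding W_def u distrib_left by linarith
qed

definition V :: "nat \<Rightarrow> nat \<Rightarrow> real" where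
  "V n m = (if stopped n m then 0 else if z \<le> n then G (int n - int m) else W (z - n) (int n - int m))"

lemma G_m1: "G (-1) = 0" and G_A: "G (int A) = 0"
  by (simp_all add: G_def g_0 g_N nat_add_distrib)

lemma G_rec: assumes "0 \<le> d" shows "G d = 1 + p * G (d + 1) + q * G (d - 1)"
proof -
  obtain j where j: "d = int j" using assms nonneg_int_cases by blast
  have "nat (d + 1) = Suc j" "nat (d + 1 + 1) = Suc (Suc j)" "nat (d - 1 + 1) = j" using j by auto
  then show ?thesis unfolding G_def using g_rec[of j] by simp
qed

lemma V_rec: assumes ns: "\<not> stopped n m" shows "V n m = 1 + p * V (Suc n) m + q * V n (Suc m)"
proof (cases "z \<le> n")
  case True
  with ns have d0: "0 \<le> int n - int m" "int n - int m < int A" by (auto simp: stopped_def)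
  have h: "V (Suc n) m = G (int n - int m + 1)"
  proof (cases "stopped (Suc n) m")
    case True
    with d0 True \<open>z \<le> n\<close> have "int n - int m + 1 = int A" by (auto simp: stopped_def)
    then show ?thesis using True by (simp add: V_def G_A)
  next
    case False with True show ?thesis by (simp add: V_def algebra_simps)
  qed
  have a: "V n (Suc m) = G (int n - int m - 1)"
  proof (cases "stopped n (Suc m)")
    case True
    with d0 True \<open>z \<le> n\<close> have "int n - int m - 1 = -1" by (auto simp: stopped_def)
    then show ?thesis using True by (simp add: V_def G_m1)
  next
    case False with True show ?thesis by (simp add: V_def algebra_simps)
  qed
  show ?thesis using ns True h a G_rec[OF d0(1)] by (simp add: V_def)
next
  case False
  then have r1: "1 \<le> z - n" by simp
  have a: "V n (Suc m) = W (z - n) (int n - int m - 1)"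
  proof -
    have "\<not> stopped n (Suc m)" using False zA by (auto simp: stopped_def)
    then show ?thesis using False by (simp add: V_def algebra_simps)
  qed
  have h: "V (Suc n) m = W (z - n - 1) (int n - int m + 1)"
  proof (cases "Suc n = z")
    case True
    then show ?thesis by (auto simp: V_def W_0 Gt_def stopped_def algebra_simps)
  next
    case False
    with \<open>\<not> z \<le> n\<close> have "Suc n < z" by simp
    then have "\<not> stopped (Suc n) m" using zA by (auto simp: stopped_def)
    then show ?thesis using \<open>Suc n < z\<close> by (simp add: V_def algebra_simps Suc_diff_Suc)
  qed
  show ?thesis using ns False a h W_rec[OF r1, of "int n - int m"] by (simp add: V_def)
qed

definition Mb :: real where "Mb = real z / p + Gb"

lemma Mb_nonneg: "0 \<le> Mb" using Gb_nonneg p_pos by (simp add: Mb_def)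

lemma V_bound: "\<bar>V n m\<bar> \<le> Mb"
proof -
  have "\<bar>W (z - n) d\<bar> \<le> Mb" for d
  proof -
    have "\<bar>W (z - n) d\<bar> \<le> \<bar>real (z - n) / p\<bar> + \<bar>U (z - n) (d + int (z - n))\<bar>"
      unfolding W_def by (rule abs_triangle_ineq)
    also have "\<dots> \<le> real (z - n) / p + Gb"
      using U_bound[of "z - n" "d + int (z - n)"] p_pos by simp
    also have "\<dots> \<le> Mb" unfolding Mb_def using p_pos by (simp add: divide_right_mono)
    finally show ?thesis .
  qed
  note WB = this
  have GB: "\<bar>G d\<bar> \<le> Mb" if "0 \<le> d" "d < int A" for d
  proof -
    have "\<bar>G d\<bar> \<le> Gb" unfolding G_def using that by (intro g_bound) auto
    then show ?thesis unfolding Mb_def using p_pos by (simp add: add_increasing)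
  qed
  show ?thesis
  proof (cases "stopped n m")
    case True then show ?thesis using Mb_nonneg by (simp add: V_def)
  next
    case False
    show ?thesis
    proof (cases "z \<le> n")
      case True
      with False have "0 \<le> int n - int m" "int n - int m < int A" by (auto simp: stopped_def)
      then show ?thesis using False True GB by (simp add: V_def)
    next
      case f2: False
      then show ?thesis using False WB by (simp add: V_def)
    qed
  qed
qed

definition R :: "nat \<Rightarrow> nat \<Rightarrow> nat \<Rightarrow> real" where "R k n m = Vk (Suc k) n m - Vk k n m"

lemma R_0: "R 0 n m = (if stopped n m then 0 else 1)" by (simp add: R_def)

lemma R_Suc: "R (Suc k) n m = (if stopped n m then 0 else p * R k (Suc n) m + q * R k n (Suc m))"
  by (simp add: R_def algebra_simps)

lemma R_bounds: "0 \<le> R k n m \<and> R k n m \<le> 1"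
proof (induction k arbitrary: n m)
  case 0 then show ?case by (simp add: R_0)
next
  case (Suc k)
  have "p * R k (Suc n) m + q * R k n (Suc m) \<le> p * 1 + q * 1"
    using Suc p_pos q_pos by (intro add_mono mult_left_mono) auto
  moreover have "0 \<le> p * R k (Suc n) m + q * R k n (Suc m)"
    using Suc p_pos q_pos by simp
  ultimately show ?case using pq by (simp add: R_Suc)
qed

lemma err_bound: "\<bar>V n m - Vk k n m\<bar> \<le> Mb * R k n m"
proof (induction k arbitrary: n m)
  case 0 then show ?case by (cases "stopped n m") (simp add: R_0 V_def, simp add: R_0 V_bound)
next
  case (Suc k)
  show ?case
  proof (cases "stopped n m")
    case True then show ?thesis by (simp add: V_def R_Suc)
  next
    case False
    have "V n m - Vk (Suc k) n m = p * (V (Suc n) m - Vk k (Suc n) m) + q * (V n (Suc m) - Vk k n (Suc m))"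
      using V_rec[OF False] False by (simp add: algebra_simps)
    then have "\<bar>V n m - Vk (Suc k) n m\<bar> \<le> p * \<bar>V (Suc n) m - Vk k (Suc n) m\<bar> + q * \<bar>V n (Suc m) - Vk k n (Suc m)\<bar>"
      using p_pos q_pos by (simp add: abs_triangle_ineq[THEN order_trans] abs_mult)
    also have "\<dots> \<le> p * (Mb * R k (Suc n) m) + q * (Mb * R k n (Suc m))"
      using Suc p_pos q_pos by (intro add_mono mult_left_mono) auto
    also have "\<dots> = Mb * R (Suc k) n m" using False by (simp add: R_Suc algebra_simps)
    finally show ?thesis .
  qed
qed

lemma Vk_mono: "Vk k n m \<le> Vk (Suc k) n m"
  using R_bounds[of k n m] by (simp add: R_def)

lemma Vk_incseq: "incseq (\<lambda>k. Vk k n m)"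
  by (rule incseq_SucI) (rule Vk_mono)

lemma Vk_nonneg: "0 \<le> Vk k n m"
proof -
  have "Vk 0 n m \<le> Vk k n m" using incseqD[OF Vk_incseq, of 0 k] by simp
  then show ?thesis by simp
qed

lemma Vk_lim: "(\<lambda>k. Vk k n m) \<longlonglongrightarrow> V n m"
proof -
  have ub: "Vk k n m \<le> V n m + Mb" for k
    using err_bound[of n m k] R_bounds[of k n m] Mb_nonneg
    by (smt (verit, best) abs_le_iff mult_left_le)
  obtain L where L: "(\<lambda>k. Vk k n m) \<longlonglongrightarrow> L" using incseq_convergent[OF Vk_incseq, of n m "V n m + Mb"] ub by blast
  have "(\<lambda>k. R k n m) \<longlonglongrightarrow> L - L"
    unfolding R_def by (intro tendsto_diff L LIMSEQ_Suc[OF L]) 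
  then have R0: "(\<lambda>k. Mb * R k n m) \<longlonglongrightarrow> 0" by (simp add: tendsto_mult_right_zero)
  have "(\<lambda>k. V n m - Vk k n m) \<longlonglongrightarrow> 0"
    by (rule Lim_null_comparison[OF _ R0]) (simp add: err_bound)
  from tendsto_diff[OF tendsto_const[of "V n m"] this] show ?thesis by simp
qed

end

lemma final_alg:
  fixes p q L N Z S c x y :: real
  assumes "p - q \<noteq> 0" "L \<noteq> 0" "p \<noteq> 0" "c \<noteq> 0"
  shows "Z / p + (N / L * S - N / L * (1 - S) - (Z * S - (Z * q * S - c * (q * y) * (p * x)) / p)) / (p - q)
    = N / (p - q) * (1 / L) - x * (q * y) / ((p - q) * (1 / c)) + (Z / p - 2 * N / ((p - q) * L)) * (1 - S)"
proof -
  define d where "d = p - q"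
  have d: "d \<noteq> 0" "q = p - d" using assms by (auto simp: d_def)
  have e: "?thesis = (Z / p + (N / L * S - N / L * (1 - S) - (Z * S - (Z * (p - d) * S - c * ((p - d) * y) * (p * x)) / p)) / d
    = N / d * (1 / L) - x * ((p - d) * y) / (d * (1 / c)) + (Z / p - 2 * N / (d * L)) * (1 - S))"
    unfolding d_def by simp
  show ?thesis unfolding e using d assms(2-4) by (simp add: field_simps)
qed

context chain
begin

lemma V01_sum: "V 0 1 = real z / p + (\<Sum>k\<le>z - 1. real ((z - 1 + k) choose k) * p ^ z * q ^ k * g (z - k))"
proof -
  obtain w where w: "z = Suc w" using z1 by (cases z) auto
  have ns: "\<not> stopped 0 1" using z1 by (simp add: stopped_def)
  have "V 0 1 = W z (-1)" using ns z1 by (simp add: V_def)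
  also have "\<dots> = real z / p + U z (int w)" by (simp add: W_def w)
  also have "U z (int w) = (\<Sum>k\<le>w. real ((w + k) choose k) * p ^ z * q ^ k * g (z - k))"
    unfolding U_def nat_int
  proof (intro sum.cong refl)
    fix k assume "k \<in> {..w}"
    then have k: "k \<le> w" by simp
    have e: "int w - int k + 1 = int (Suc (w - k))" using k by simp
    have "Gt (int w - int k) = g (z - k)"
      using k w zA by (simp add: Gt_def G_def e Suc_diff_le del: of_nat_Suc)
    then show "nb z k * p ^ z * q ^ k * Gt (int w - int k) = real ((w + k) choose k) * p ^ z * q ^ k * g (z - k)"
      by (simp add: nb_def w)
  qed
  finally show ?thesis by (simp add: w)
qed

lemma V01_formula:
  "V 0 1 = (A + 1) / (p - q) * (1 / (1 - lam ^ (A + 1)))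
     - p ^ (z - 1) * q ^ z / ((p - q) * beta_fn z z)
     + (z / p - 2 * (A + 1) / ((p - q) * (1 - lam ^ (A + 1)))) * inc_beta q z z"
proof -
  obtain w where w: "z = Suc w" using z1 by (cases z) auto
  have p1: "1 - q = p" "1 - p = q" using pq by auto
  define K where "K = real (Suc A) / (1 - lam ^ Suc A)"
  define S1 where "S1 = nbP w q"
  define T where "T = nbT w q"
  define c where "c = cst w"
  have gk: "g i = (K * (1 - lam ^ i) - real i) / (p - q)" for i unfolding g_def K_def by simp
  have lam_pow: "p ^ Suc w * q ^ k * lam ^ (Suc w - k) = q ^ Suc w * p ^ k" if "k \<le> w" for k
  proof -
    have "p ^ Suc w = p ^ k * p ^ (Suc w - k)" "q ^ Suc w = q ^ k * q ^ (Suc w - k)"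
      using that by (simp_all add: power_add[symmetric])
    then show ?thesis unfolding lam_def using p_pos by (simp add: power_divide field_simps)
  qed
  have S2: "(\<Sum>k\<le>w. real ((w + k) choose k) * p ^ Suc w * q ^ k * lam ^ (Suc w - k)) = 1 - S1"
  proof -
    have "(\<Sum>k\<le>w. real ((w + k) choose k) * p ^ Suc w * q ^ k * lam ^ (Suc w - k)) = nbP w p"
      unfolding nbP_def p1 lessThan_Suc_atMost
    proof (intro sum.cong refl)
      fix k assume "k \<in> {..w}"
      then have "k \<le> w" by simp
      from lam_pow[OF this] show "real ((w + k) choose k) * p ^ Suc w * q ^ k * lam ^ (Suc w - k) = real ((w + k) choose k) * q ^ Suc w * p ^ k"
        by (metis mult.assoc)
    qed
    also have "\<dots> = 1 - S1" using nbP_sym[of w q] p1 unfolding S1_def by simp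
    finally show ?thesis .
  qed
  have S1e: "(\<Sum>k\<le>w. real ((w + k) choose k) * p ^ Suc w * q ^ k) = S1"
    unfolding S1_def nbP_def p1 lessThan_Suc_atMost ..
  have S3: "(\<Sum>k\<le>w. real ((w + k) choose k) * p ^ Suc w * q ^ k * real (Suc w - k)) = real (Suc w) * S1 - T"
  proof -
    have "(\<Sum>k\<le>w. real ((w + k) choose k) * p ^ Suc w * q ^ k * real (Suc w - k))
        = (\<Sum>k\<le>w. real (Suc w) * (real ((w + k) choose k) * p ^ Suc w * q ^ k) - real ((w + k) choose k) * p ^ Suc w * q ^ k * real k)"
      by (intro sum.cong refl) (simp add: of_nat_diff algebra_simps)
    also have "\<dots> = real (Suc w) * S1 - T"
      unfolding sum_subtractf sum_distrib_left[symmetric] S1e T_def nbT_def p1 lessThan_Suc_atMost ..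
    finally show ?thesis .
  qed
  have Tq: "p * T = real (Suc w) * q * S1 - c * q ^ Suc w * p ^ Suc w"
    using nbT_eq[of q w] unfolding T_def S1_def c_def p1 .
  have V0: "V 0 1 = real (Suc w) / p + (\<Sum>k\<le>w. real ((w + k) choose k) * p ^ Suc w * q ^ k * g (Suc w - k))"
    using V01_sum unfolding w by simp
  have "V 0 1 = real (Suc w) / p + (\<Sum>k\<le>w. (K * (real ((w + k) choose k) * p ^ Suc w * q ^ k)
        - K * (real ((w + k) choose k) * p ^ Suc w * q ^ k * lam ^ (Suc w - k))
        - real ((w + k) choose k) * p ^ Suc w * q ^ k * real (Suc w - k)) / (p - q))"
    unfolding V0 gk by (intro arg_cong2[where f="(+)"] refl sum.cong) (simp_all add: algebra_simps diff_divide_distrib)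
  also have "\<dots> = real (Suc w) / p + (K * S1 - K * (1 - S1) - (real (Suc w) * S1 - T)) / (p - q)"
    unfolding sum_divide_distrib[symmetric] sum_subtractf sum_distrib_left[symmetric] S1e S2 S3 ..
  finally have V: "V 0 1 = real (Suc w) / p + (K * S1 - K * (1 - S1) - (real (Suc w) * S1 - T)) / (p - q)" .
  have B: "beta_fn z z = 1 / c" unfolding w c_def by (rule beta_fn_eq)
  have I: "inc_beta q z z = 1 - S1" unfolding w S1_def using q_pos by (intro inc_beta_eq) simp
  have pq0: "p - q \<noteq> 0" using qp by simp
  have ld: "1 - lam ^ Suc A \<noteq> 0" using lam_den by simp
  have T': "T = (real (Suc w) * q * S1 - c * q ^ Suc w * p ^ Suc w) / p" using Tq p_pos by (simp add: field_simps)
  have c0: "c \<noteq> 0" unfolding c_def using cst_pos[of w] by simp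
  have "V 0 1 = real (Suc A) / (p - q) * (1 / (1 - lam ^ Suc A)) - p ^ w * (q * q ^ w) / ((p - q) * (1 / c))
     + (real (Suc w) / p - 2 * real (Suc A) / ((p - q) * (1 - lam ^ Suc A))) * (1 - S1)"
    unfolding V T' K_def
    using final_alg[where L = "1 - lam ^ Suc A" and N = "real (Suc A)" and Z = "real (Suc w)" and S = S1
        and x = "p ^ w" and y = "q ^ w" and c = c and p = p and q = q] pq0 ld c0 p_pos
    by simp
  then show ?thesis unfolding B I by (simp add: w)
qed

end

lemma exp_dist_prob: "0 < l \<Longrightarrow> prob_space (exp_dist l)"
  unfolding exp_dist_def by (rule prob_space_exponential_density)

lemma sets_exp_dist[simp, measurable_cong]: "sets (exp_dist l) = sets borel"
  unfolding exp_dist_def by simp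

lemma space_exp_dist[simp]: "space (exp_dist l) = UNIV"
  unfolding exp_dist_def by simp

lemma space_stream_exp[simp]: "space (stream_space (exp_dist l)) = UNIV"
  by (simp add: space_stream_space streams_UNIV)

lemma nn_integral_exp_dist:
  assumes [measurable]: "f \<in> borel_measurable borel"
  shows "(\<integral>\<^sup>+x. f x \<partial>exp_dist l) = (\<integral>\<^sup>+x. ennreal (exponential_density l x) * f x \<partial>lborel)"
  unfolding exp_dist_def by (subst nn_integral_density) auto

lemma expd_shift:
  assumes "0 \<le> x" "0 < v"
  shows "exponential_density b (x + v) = exp (- x * b) * exponential_density b v"
  using assms by (simp add: erlang_density_def algebra_simps exp_add[symmetric])

lemma expd_scale:
  assumes "0 < a" "0 < b"
  shows "exponential_density a x * exp (- x * b) = a / (a + b) * exponential_density (a + b) x"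
proof (cases "x < 0")
  case True then show ?thesis by (simp add: erlang_density_def)
next
  case False
  then have "exponential_density a x * exp (- x * b) = a * exp (- x * (a + b))"
    by (simp add: erlang_density_def algebra_simps exp_add[symmetric])
  also have "\<dots> = a / (a + b) * ((a + b) * exp (- x * (a + b)))"
    using assms by simp
  also have "\<dots> = a / (a + b) * exponential_density (a + b) x"
    using False by (simp add: erlang_density_def algebra_simps)
  finally show ?thesis .
qed

lemma meas_pair_exp[measurable_cong]:
  "sets (M \<Otimes>\<^sub>M exp_dist b) = sets (M \<Otimes>\<^sub>M borel)"
  by (rule sets_pair_measure_cong) simp_all

lemma half_lemma:
  fixes a b :: real and g :: "real \<Rightarrow> real \<Rightarrow> ennreal"
  assumes a: "0 < a" and b: "0 < b"
  assumes g[measurable]: "case_prod g \<in> borel_measurable (borel \<Otimes>\<^sub>M borel)"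
  shows "(\<integral>\<^sup>+x. \<integral>\<^sup>+y. (if x < y then g x y else 0) \<partial>exp_dist b \<partial>exp_dist a)
       = ennreal (a / (a + b)) * (\<integral>\<^sup>+u. \<integral>\<^sup>+v. g u (u + v) \<partial>exp_dist b \<partial>exp_dist (a + b))"
proof -
  interpret B: prob_space "exp_dist b" using b by (rule exp_dist_prob)
  have inner: "(\<integral>\<^sup>+y. (if x < y then g x y else 0) \<partial>exp_dist b)
      = ennreal (exp (- x * b)) * (\<integral>\<^sup>+v. g x (x + v) \<partial>exp_dist b)" if x: "0 \<le> x" for x
  proof -
    have "(\<integral>\<^sup>+y. (if x < y then g x y else 0) \<partial>exp_dist b)
        = (\<integral>\<^sup>+y. ennreal (exponential_density b y) * ((if x < y then g x y else 0)) \<partial>lborel)"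
      by (rule nn_integral_exp_dist) measurable
    also have "\<dots> = (\<integral>\<^sup>+v. ennreal (exponential_density b (x + 1 * v)) * (if x < x + 1 * v then g x (x + 1 * v) else 0) \<partial>lborel)"
      using nn_integral_real_affine[of "\<lambda>y. ennreal (exponential_density b y) * ((if x < y then g x y else 0))" 1 x]
      by simp
    also have "\<dots> = (\<integral>\<^sup>+v. ennreal (exp (- x * b)) * (ennreal (exponential_density b v) * g x (x + v)) \<partial>lborel)"
    proof (rule nn_integral_cong_AE)
      show "AE v in lborel. ennreal (exponential_density b (x + 1 * v)) * (if x < x + 1 * v then g x (x + 1 * v) else 0)
          = ennreal (exp (- x * b)) * (ennreal (exponential_density b v) * g x (x + v))"
        using AE_lborel_singleton[of 0]
      proof eventually_elim
        case (elim v)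
        show ?case
        proof (cases "0 < v")
          case True
          then show ?thesis using x expd_shift[OF x True, of b]
            by (simp add: ennreal_mult' mult.assoc)
        next
          case False
          with elim have "v < 0" by simp
          then show ?thesis by (simp add: erlang_density_def)
        qed
      qed
    qed
    also have "\<dots> = ennreal (exp (- x * b)) * (\<integral>\<^sup>+v. ennreal (exponential_density b v) * g x (x + v) \<partial>lborel)"
      by (rule nn_integral_cmult) measurable
    also have "(\<integral>\<^sup>+v. ennreal (exponential_density b v) * g x (x + v) \<partial>lborel) = (\<integral>\<^sup>+v. g x (x + v) \<partial>exp_dist b)"
      by (rule nn_integral_exp_dist[symmetric]) measurable
    finally show ?thesis .
  qed
  have "(\<integral>\<^sup>+x. \<integral>\<^sup>+y. (if x < y then g x y else 0) \<partial>exp_dist b \<partial>exp_dist a)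
      = (\<integral>\<^sup>+x. ennreal (exponential_density a x) * (\<integral>\<^sup>+y. (if x < y then g x y else 0) \<partial>exp_dist b) \<partial>lborel)"
  proof (rule nn_integral_exp_dist)
    have "(\<lambda>(x, y). (if x < y then g x y else 0)) \<in> borel_measurable (borel \<Otimes>\<^sub>M exp_dist b)"
      by measurable
    then show "(\<lambda>x. \<integral>\<^sup>+y. (if x < y then g x y else 0) \<partial>exp_dist b) \<in> borel_measurable borel"
      by (rule B.borel_measurable_nn_integral)
  qed
  also have "\<dots> = (\<integral>\<^sup>+x. ennreal (a / (a + b)) * (ennreal (exponential_density (a + b) x) * (\<integral>\<^sup>+v. g x (x + v) \<partial>exp_dist b)) \<partial>lborel)"
  proof (rule nn_integral_cong)
    fix x :: real
    show "ennreal (exponential_density a x) * (\<integral>\<^sup>+y. (if x < y then g x y else 0) \<partial>exp_dist b)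
        = ennreal (a / (a + b)) * (ennreal (exponential_density (a + b) x) * (\<integral>\<^sup>+v. g x (x + v) \<partial>exp_dist b))"
    proof (cases "0 \<le> x")
      case True
      have "ennreal (exponential_density a x) * ennreal (exp (- x * b)) = ennreal (a / (a + b)) * ennreal (exponential_density (a + b) x)"
        using expd_scale[OF a b, of x] a b True
        by (simp add: ennreal_mult'[symmetric] ennreal_mult[symmetric])
      then show ?thesis unfolding inner[OF True] by (simp add: mult.assoc[symmetric])
    next
      case False then show ?thesis by (simp add: erlang_density_def)
    qed
  qed
  also have "\<dots> = ennreal (a / (a + b)) * (\<integral>\<^sup>+x. ennreal (exponential_density (a + b) x) * (\<integral>\<^sup>+v. g x (x + v) \<partial>exp_dist b) \<partial>lborel)"
    by (rule nn_integral_cmult) measurable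
  also have "(\<integral>\<^sup>+x. ennreal (exponential_density (a + b) x) * (\<integral>\<^sup>+v. g x (x + v) \<partial>exp_dist b) \<partial>lborel)
      = (\<integral>\<^sup>+u. \<integral>\<^sup>+v. g u (u + v) \<partial>exp_dist b \<partial>exp_dist (a + b))"
    by (rule nn_integral_exp_dist[symmetric]) measurable
  finally show ?thesis .
qed


lemma AE_exp_dist_neq: "AE y in exp_dist b. y \<noteq> x"
  unfolding exp_dist_def by (subst AE_density) (auto intro: AE_mp[OF AE_lborel_singleton[of x]])

lemma split_lemma:
  fixes a b :: real and g :: "real \<Rightarrow> real \<Rightarrow> ennreal"
  assumes a: "0 < a" and b: "0 < b"
  assumes g[measurable]: "case_prod g \<in> borel_measurable (borel \<Otimes>\<^sub>M borel)"
  shows "(\<integral>\<^sup>+x. \<integral>\<^sup>+y. g x y \<partial>exp_dist b \<partial>exp_dist a)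
       = ennreal (a / (a + b)) * (\<integral>\<^sup>+u. \<integral>\<^sup>+v. g u (u + v) \<partial>exp_dist b \<partial>exp_dist (a + b))
       + ennreal (b / (a + b)) * (\<integral>\<^sup>+u. \<integral>\<^sup>+v. g (u + v) u \<partial>exp_dist a \<partial>exp_dist (a + b))"
proof -
  interpret A: prob_space "exp_dist a" using a by (rule exp_dist_prob)
  interpret B: prob_space "exp_dist b" using b by (rule exp_dist_prob)
  interpret AB: pair_sigma_finite "exp_dist a" "exp_dist b"
    by (intro pair_sigma_finite.intro A.sigma_finite_measure_axioms B.sigma_finite_measure_axioms)
  have in1: "(\<integral>\<^sup>+y. g x y \<partial>exp_dist b) = (\<integral>\<^sup>+y. (if x < y then g x y else 0) \<partial>exp_dist b) + (\<integral>\<^sup>+y. (if y < x then g x y else 0) \<partial>exp_dist b)" for x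
  proof -
    have "(\<integral>\<^sup>+y. g x y \<partial>exp_dist b) = (\<integral>\<^sup>+y. (if x < y then g x y else 0) + (if y < x then g x y else 0) \<partial>exp_dist b)"
      by (rule nn_integral_cong_AE) (use AE_exp_dist_neq[where b=b and x=x] in \<open>auto elim!: eventually_mono\<close>)
    also have "\<dots> = (\<integral>\<^sup>+y. (if x < y then g x y else 0) \<partial>exp_dist b) + (\<integral>\<^sup>+y. (if y < x then g x y else 0) \<partial>exp_dist b)"
      by (rule nn_integral_add) measurable
    finally show ?thesis .
  qed
  have "(\<integral>\<^sup>+x. \<integral>\<^sup>+y. g x y \<partial>exp_dist b \<partial>exp_dist a)
     = (\<integral>\<^sup>+x. \<integral>\<^sup>+y. (if x < y then g x y else 0) \<partial>exp_dist b \<partial>exp_dist a)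
     + (\<integral>\<^sup>+x. \<integral>\<^sup>+y. (if y < x then g x y else 0) \<partial>exp_dist b \<partial>exp_dist a)"
    unfolding in1 by (rule nn_integral_add) measurable
  also have "(\<integral>\<^sup>+x. \<integral>\<^sup>+y. (if y < x then g x y else 0) \<partial>exp_dist b \<partial>exp_dist a)
     = (\<integral>\<^sup>+y. \<integral>\<^sup>+x. (if y < x then g x y else 0) \<partial>exp_dist a \<partial>exp_dist b)"
    by (rule AB.Fubini'[symmetric]) measurable
  also have "\<dots> = ennreal (b / (b + a)) * (\<integral>\<^sup>+u. \<integral>\<^sup>+v. g (u + v) u \<partial>exp_dist a \<partial>exp_dist (b + a))"
    by (rule half_lemma[OF b a, where g = "\<lambda>y x. g x y"]) measurable
  also note half_lemma[OF a b g]
  finally show ?thesis by (simp add: add.commute)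
qed


locale mining =
  fixes q tau0 :: real
  assumes q0: "0 < q" and q1: "q < 1" and t0: "0 < tau0"
begin

definition "lh = (1 - q) / tau0"
definition "la = q / tau0"

lemma lh_pos: "0 < lh" and la_pos: "0 < la" and ll_pos: "0 < 1 / tau0"
  using q0 q1 t0 by (auto simp: lh_def la_def)

lemma lhla: "lh + la = 1 / tau0"
  unfolding lh_def la_def by (simp add: add_divide_distrib[symmetric])

lemma lh_frac: "lh / (lh + la) = 1 - q" and la_frac: "la / (lh + la) = q"
  unfolding lhla using t0 by (simp_all add: lh_def la_def)

abbreviation "Eh \<equiv> exp_dist lh"
abbreviation "Ea \<equiv> exp_dist la"
abbreviation "El \<equiv> exp_dist (1 / tau0)"
abbreviation "M1 \<equiv> stream_space Eh"
abbreviation "M2 \<equiv> stream_space Ea"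
abbreviation "\<Omega> \<equiv> M1 \<Otimes>\<^sub>M M2"

lemma Omega_eq: "mining_space q tau0 = \<Omega>"
  unfolding mining_space_def lh_def la_def ..

sublocale Eh: prob_space Eh by (rule exp_dist_prob[OF lh_pos])
sublocale Ea: prob_space Ea by (rule exp_dist_prob[OF la_pos])
sublocale El: prob_space El by (rule exp_dist_prob[OF ll_pos])
sublocale S1: prob_space M1 by (rule Eh.prob_space_stream_space)
sublocale S2: prob_space M2 by (rule Ea.prob_space_stream_space)
sublocale P: pair_prob_space M1 M2 by unfold_locales
sublocale PHa: pair_sigma_finite M1 Ea by unfold_locales
sublocale Om: prob_space \<Omega> by (rule P.prob_space_axioms)

definition Phih :: "real \<Rightarrow> real stream \<times> real stream \<Rightarrow> real stream \<times> real stream" where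
  "Phih u w = (u ## fst w, (u + shd (snd w)) ## stl (snd w))"
definition Phia :: "real \<Rightarrow> real stream \<times> real stream \<Rightarrow> real stream \<times> real stream" where
  "Phia u w = ((u + shd (fst w)) ## stl (fst w), u ## snd w)"

lemma measurable_Phih[measurable]: "(\<lambda>(u, w). Phih u w) \<in> measurable (borel \<Otimes>\<^sub>M \<Omega>) \<Omega>"
  unfolding Phih_def by measurable
lemma measurable_Phia[measurable]: "(\<lambda>(u, w). Phia u w) \<in> measurable (borel \<Otimes>\<^sub>M \<Omega>) \<Omega>"
  unfolding Phia_def by measurable

lemma measurable_Phih1[measurable]: "Phih u \<in> measurable \<Omega> \<Omega>"
  unfolding Phih_def by measurable
lemma measurable_Phia1[measurable]: "Phia u \<in> measurable \<Omega> \<Omega>"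
  unfolding Phia_def by measurable

lemma decomp:
  assumes F[measurable]: "F \<in> borel_measurable \<Omega>"
  shows "(\<integral>\<^sup>+w. F w \<partial>\<Omega>) = ennreal (1 - q) * (\<integral>\<^sup>+u. \<integral>\<^sup>+w. F (Phih u w) \<partial>\<Omega> \<partial>El)
     + ennreal q * (\<integral>\<^sup>+u. \<integral>\<^sup>+w. F (Phia u w) \<partial>\<Omega> \<partial>El)"
proof -
  define g where "g x y = (\<integral>\<^sup>+h. \<integral>\<^sup>+a. F (x ## h, y ## a) \<partial>M2 \<partial>M1)" for x y
  have g[measurable]: "case_prod g \<in> borel_measurable (borel \<Otimes>\<^sub>M borel)"
    unfolding g_def by measurable
  have "(\<integral>\<^sup>+w. F w \<partial>\<Omega>) = (\<integral>\<^sup>+h. \<integral>\<^sup>+a. F (h, a) \<partial>M2 \<partial>M1)"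
    by (rule S2.nn_integral_fst[symmetric]) measurable
  also have "\<dots> = (\<integral>\<^sup>+x. \<integral>\<^sup>+h. \<integral>\<^sup>+a. F (x ## h, a) \<partial>M2 \<partial>M1 \<partial>Eh)"
    by (rule Eh.nn_integral_stream_space) measurable
  also have "\<dots> = (\<integral>\<^sup>+x. \<integral>\<^sup>+h. \<integral>\<^sup>+y. \<integral>\<^sup>+a. F (x ## h, y ## a) \<partial>M2 \<partial>Ea \<partial>M1 \<partial>Eh)"
    by (intro nn_integral_cong Ea.nn_integral_stream_space) measurable
  also have "\<dots> = (\<integral>\<^sup>+x. \<integral>\<^sup>+y. g x y \<partial>Ea \<partial>Eh)"
    unfolding g_def by (intro nn_integral_cong PHa.Fubini'[symmetric]) measurable
  also have "\<dots> = ennreal (1 - q) * (\<integral>\<^sup>+u. \<integral>\<^sup>+v. g u (u + v) \<partial>Ea \<partial>El)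
       + ennreal q * (\<integral>\<^sup>+u. \<integral>\<^sup>+v. g (u + v) u \<partial>Eh \<partial>El)"
    using split_lemma[OF lh_pos la_pos g] unfolding lh_frac la_frac unfolding lhla .
  also have "(\<integral>\<^sup>+u. \<integral>\<^sup>+v. g u (u + v) \<partial>Ea \<partial>El) = (\<integral>\<^sup>+u. \<integral>\<^sup>+w. F (Phih u w) \<partial>\<Omega> \<partial>El)"
  proof (intro nn_integral_cong)
    fix u :: real
    have "(\<integral>\<^sup>+v. g u (u + v) \<partial>Ea) = (\<integral>\<^sup>+h. \<integral>\<^sup>+v. \<integral>\<^sup>+a. F (u ## h, (u + v) ## a) \<partial>M2 \<partial>Ea \<partial>M1)"
      unfolding g_def by (rule PHa.Fubini') measurable
    also have "\<dots> = (\<integral>\<^sup>+h. \<integral>\<^sup>+a. F (u ## h, (u + shd a) ## stl a) \<partial>M2 \<partial>M1)"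
    proof (intro nn_integral_cong)
      fix h
      have "(\<integral>\<^sup>+a. F (u ## h, (u + shd a) ## stl a) \<partial>M2)
          = (\<integral>\<^sup>+v. \<integral>\<^sup>+a. F (u ## h, (u + shd (v ## a)) ## stl (v ## a)) \<partial>M2 \<partial>Ea)"
        by (rule Ea.nn_integral_stream_space) measurable
      then show "(\<integral>\<^sup>+v. \<integral>\<^sup>+a. F (u ## h, (u + v) ## a) \<partial>M2 \<partial>Ea) = (\<integral>\<^sup>+a. F (u ## h, (u + shd a) ## stl a) \<partial>M2)"
        by simp
    qed
    also have "\<dots> = (\<integral>\<^sup>+w. F (Phih u w) \<partial>\<Omega>)"
      using S2.nn_integral_fst[of "\<lambda>w. F (Phih u w)" M1] by (simp add: Phih_def)
    finally show "(\<integral>\<^sup>+v. g u (u + v) \<partial>Ea) = (\<integral>\<^sup>+w. F (Phih u w) \<partial>\<Omega>)" .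
  qed
  also have "(\<integral>\<^sup>+u. \<integral>\<^sup>+v. g (u + v) u \<partial>Eh \<partial>El) = (\<integral>\<^sup>+u. \<integral>\<^sup>+w. F (Phia u w) \<partial>\<Omega> \<partial>El)"
  proof (intro nn_integral_cong)
    fix u :: real
    have "(\<integral>\<^sup>+h. \<integral>\<^sup>+a. F ((u + shd h) ## stl h, u ## a) \<partial>M2 \<partial>M1)
       = (\<integral>\<^sup>+v. \<integral>\<^sup>+h. \<integral>\<^sup>+a. F ((u + shd (v ## h)) ## stl (v ## h), u ## a) \<partial>M2 \<partial>M1 \<partial>Eh)"
      by (rule Eh.nn_integral_stream_space) measurable
    then have "(\<integral>\<^sup>+v. g (u + v) u \<partial>Eh) = (\<integral>\<^sup>+h. \<integral>\<^sup>+a. F ((u + shd h) ## stl h, u ## a) \<partial>M2 \<partial>M1)"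
      unfolding g_def by simp
    also have "\<dots> = (\<integral>\<^sup>+w. F (Phia u w) \<partial>\<Omega>)"
      using S2.nn_integral_fst[of "\<lambda>w. F (Phia u w)" M1] by (simp add: Phia_def)
    finally show "(\<integral>\<^sup>+v. g (u + v) u \<partial>Eh) = (\<integral>\<^sup>+w. F (Phia u w) \<partial>\<Omega>)" .
  qed
  finally show ?thesis .
qed

end

definition PS :: "real stream \<Rightarrow> nat \<Rightarrow> real" where "PS s k = (\<Sum>i\<le>k. s !! i)"

lemma PS_Cons_0[simp]: "PS (x ## s) 0 = x" by (simp add: PS_def)
lemma PS_Cons_Suc[simp]: "PS (x ## s) (Suc k) = x + PS s k"
  unfolding PS_def sum.atMost_Suc_shift by simp

lemma PS_split: "PS s 0 = shd s" "PS s (Suc k) = shd s + PS (stl s) k"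
  by (metis PS_Cons_0 stream.collapse, metis PS_Cons_Suc stream.collapse)

lemma counting_PS: "counting s t = card {k. PS s k \<le> t}"
  unfolding counting_def PS_def ..

definition nonneg :: "real stream \<Rightarrow> bool" where "nonneg s \<longleftrightarrow> (\<forall>i. 0 \<le> s !! i)"
definition divg :: "real stream \<Rightarrow> bool" where "divg s \<longleftrightarrow> (\<forall>t. finite {k. PS s k \<le> t})"

lemma nonneg_stl: "nonneg s \<Longrightarrow> nonneg (stl s)"
  unfolding nonneg_def by (metis snth.simps(2))
lemma nonneg_shd: "nonneg s \<Longrightarrow> 0 \<le> shd s"
  unfolding nonneg_def by (metis snth.simps(1))

lemma PS_ge_shd: "nonneg s \<Longrightarrow> shd s \<le> PS s k"
proof -
  assume n: "nonneg s"
  have "0 \<le> PS (stl s) k'" for k' using nonneg_stl[OF n] unfolding PS_def nonneg_def by (simp add: sum_nonneg)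
  then show ?thesis by (cases k) (simp_all add: PS_split)
qed

lemma PS_mono: "nonneg s \<Longrightarrow> j \<le> k \<Longrightarrow> PS s j \<le> PS s k"
  unfolding PS_def nonneg_def by (intro sum_mono2) auto

lemma divg_stl: "divg s \<Longrightarrow> divg (stl s)"
  unfolding divg_def
proof
  fix t assume d: "\<forall>t. finite {k. PS s k \<le> t}"
  have "{k. PS (stl s) k \<le> t} = Suc -` {k. PS s k \<le> t + shd s}"
    by (auto simp: PS_split)
  moreover have "finite (Suc -` {k. PS s k \<le> t + shd s})"
    by (rule finite_vimageI) (use d in auto)
  ultimately show "finite {k. PS (stl s) k \<le> t}" by simp
qed

lemma cnt_shift: "counting s t = counting ((shd s - x) ## stl s) (t - x)"
proof -
  have "PS ((shd s - x) ## stl s) k = PS s k - x" for k by (cases k) (simp_all add: PS_split)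
  then show ?thesis unfolding counting_PS by simp
qed

lemma cnt_zero: "nonneg s \<Longrightarrow> t < shd s \<Longrightarrow> counting s t = 0"
  unfolding counting_PS using PS_ge_shd by (metis (mono_tags, lifting) Collect_empty_eq card.empty leD order_le_less_trans)

lemma cnt_suc:
  assumes "divg (stl s)" "shd s \<le> t"
  shows "counting s t = Suc (counting (stl s) (t - shd s))"
proof -
  have f: "finite {k. PS (stl s) k \<le> t - shd s}" using assms(1) by (simp add: divg_def)
  have "{k. PS s k \<le> t} = insert 0 (Suc ` {k. PS (stl s) k \<le> t - shd s})"
    using assms(2) by (auto simp: PS_split image_iff elim: nat.exhaust_sel) (metis not0_implies_Suc PS_split(2) add.commute le_diff_eq)
  then show ?thesis unfolding counting_PS using f by (simp add: card_image)
qed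

definition stp :: "nat \<Rightarrow> nat \<Rightarrow> nat \<Rightarrow> nat \<Rightarrow> bool" where
  "stp A z n m \<longleftrightarrow> int A \<le> int n - int m \<or> (z \<le> n \<and> n < m)"

definition hit :: "nat \<Rightarrow> nat \<Rightarrow> nat \<Rightarrow> nat \<Rightarrow> real stream \<times> real stream \<Rightarrow> real set" where
  "hit A z n m w = {t. 0 \<le> t \<and> stp A z (n + counting (fst w) t) (m + counting (snd w) t)}"

definition Tinf :: "nat \<Rightarrow> nat \<Rightarrow> nat \<Rightarrow> nat \<Rightarrow> real stream \<times> real stream \<Rightarrow> ennreal" where
  "Tinf A z n m w = (if hit A z n m w = {} then \<infinity> else ennreal (Inf (hit A z n m w)))"

lemma T'_hit: "T' A z w = Inf (hit A z 0 1 w)"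
  unfolding T'_def hit_def attack_over_def stp_def by (simp add: Let_def)

definition el :: "real stream \<times> real stream \<Rightarrow> real" where
  "el w = min (shd (fst w)) (shd (snd w))"

definition stepw :: "real stream \<times> real stream \<Rightarrow> real stream \<times> real stream" where
  "stepw w = (if shd (fst w) < shd (snd w) then (stl (fst w), (shd (snd w) - shd (fst w)) ## stl (snd w))
              else ((shd (fst w) - shd (snd w)) ## stl (fst w), stl (snd w)))"

definition good :: "real stream \<times> real stream \<Rightarrow> bool" where
  "good w \<longleftrightarrow> nonneg (fst w) \<and> nonneg (snd w) \<and> divg (fst w) \<and> divg (snd w)"

lemma stp_0:
  assumes "stp A z n m" "nonneg (fst w)" "nonneg (snd w)" "0 < shd (fst w)" "0 < shd (snd w)"
  shows "Tinf A z n m w = 0"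
proof -
  have "0 \<in> hit A z n m w" using assms cnt_zero[of "fst w" 0] cnt_zero[of "snd w" 0] by (simp add: hit_def)
  moreover have "Inf (hit A z n m w) = 0"
    by (rule cInf_eq_minimum[OF calculation]) (simp add: hit_def)
  ultimately show ?thesis by (auto simp: Tinf_def)
qed

lemma hit_nonneg: "t \<in> hit A z n m w \<Longrightarrow> 0 \<le> t" by (simp add: hit_def)

lemma Inf_translate:
  fixes S :: "real set"
  assumes "S \<noteq> {}" "\<forall>s\<in>S. 0 \<le> s"
  shows "Inf ((\<lambda>s. x + s) ` S) = x + Inf S"
proof -
  have "bdd_below S" using assms(2) by (auto simp: bdd_below_def)
  then have "(INF s\<in>S. x + s) = x + (INF s\<in>S. s)"
    using Inf_add_eq[of "\<lambda>s. s" S x] assms(1) by simp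
  then show ?thesis by simp
qed

lemma Tinf_step:
  assumes g: "good w" and ns: "\<not> stp A z n m"
  shows "Tinf A z n m w = ennreal (el w) +
    (if shd (fst w) < shd (snd w) then Tinf A z (Suc n) m (stepw w) else Tinf A z n (Suc m) (stepw w))"
proof -
  obtain h a where w: "w = (h, a)" by (cases w)
  have nh: "nonneg h" and na: "nonneg a" and dh: "divg h" and da: "divg a"
    using g by (auto simp: good_def w)
  define x where "x = el w"
  have x0: "0 \<le> x" using nonneg_shd[OF nh] nonneg_shd[OF na] by (simp add: x_def el_def w)
  define n' m' where "n' = (if shd h < shd a then Suc n else n)" and "m' = (if shd h < shd a then m else Suc m)"
  have key: "hit A z n m w = (\<lambda>s. x + s) ` hit A z n' m' (stepw w)"
  proof -
    have small: "t < x \<Longrightarrow> counting h t = 0 \<and> counting a t = 0" for t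
      using cnt_zero[OF nh, of t] cnt_zero[OF na, of t] by (auto simp: x_def el_def w)
    have big: "x \<le> t \<Longrightarrow> n + counting h t = n' + counting (fst (stepw w)) (t - x)
         \<and> m + counting a t = m' + counting (snd (stepw w)) (t - x)" for t
    proof (cases "shd h < shd a")
      case True
      assume "x \<le> t"
      then have xt: "shd h \<le> t" and xe: "x = shd h" using True by (auto simp: x_def el_def w)
      show ?thesis using True cnt_suc[OF divg_stl[OF dh] xt] cnt_shift[of a t x]
        by (simp add: n'_def m'_def stepw_def w xe)
    next
      case False
      assume "x \<le> t"
      then have xt: "shd a \<le> t" and xe: "x = shd a" using False by (auto simp: x_def el_def w)
      show ?thesis using False cnt_suc[OF divg_stl[OF da] xt] cnt_shift[of h t x]
        by (simp add: n'_def m'_def stepw_def w xe)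
    qed
    show ?thesis
    proof (intro set_eqI iffI)
      fix t assume t: "t \<in> hit A z n m w"
      have "\<not> t < x"
      proof
        assume "t < x"
        with small[OF this] t ns show False by (simp add: hit_def w)
      qed
      then have "x \<le> t" by simp
      with big[OF this] t have "t - x \<in> hit A z n' m' (stepw w)" by (simp add: hit_def w)
      then show "t \<in> (\<lambda>s. x + s) ` hit A z n' m' (stepw w)" by (auto intro: image_eqI[of _ _ "t - x"])
    next
      fix t assume "t \<in> (\<lambda>s. x + s) ` hit A z n' m' (stepw w)"
      then obtain s where s: "s \<in> hit A z n' m' (stepw w)" "t = x + s" by auto
      then have "0 \<le> s" by (simp add: hit_def)
      with x0 s big[of t] show "t \<in> hit A z n m w" by (simp add: hit_def w)
    qed
  qed
  have "Tinf A z n m w = ennreal x + Tinf A z n' m' (stepw w)"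
  proof (cases "hit A z n' m' (stepw w) = {}")
    case True then show ?thesis by (simp add: Tinf_def key)
  next
    case False
    have "Inf (hit A z n m w) = x + Inf (hit A z n' m' (stepw w))"
      unfolding key by (rule Inf_translate[OF False]) (simp add: hit_def)
    moreover have "0 \<le> Inf (hit A z n' m' (stepw w))"
      using False by (intro cInf_greatest) (auto simp: hit_def)
    ultimately show ?thesis using False x0 by (simp add: Tinf_def key ennreal_plus)
  qed
  then show ?thesis by (simp add: n'_def m'_def x_def w)
qed

lemma sets_stream_exp[measurable_cong]: "sets (stream_space (exp_dist l)) = sets (stream_space borel)"
  by (rule sets_stream_space_cong) (simp add: exp_dist_def)

lemma measurable_card:
  assumes P[measurable]: "\<And>k. Measurable.pred M (P k)"
  shows "(\<lambda>x. card {k::nat. P k x}) \<in> measurable M (count_space UNIV)"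
proof (subst measurable_count_space_eq2_countable, safe)
  fix n :: nat
  have c: "countable {F::nat set. finite F \<and> card F = n}"
    by (rule countable_subset[OF _ countable_Collect_finite]) auto
  have "(\<lambda>x. card {k. P k x}) -` {n} \<inter> space M =
      {x\<in>space M. (n = 0 \<and> (\<forall>N. \<exists>k\<ge>N. P k x)) \<or> (\<exists>F\<in>{F. finite F \<and> card F = n}. \<forall>k. P k x = (k \<in> F))}"
  proof (intro set_eqI iffI)
    fix x assume x: "x \<in> (\<lambda>x. card {k. P k x}) -` {n} \<inter> space M"
    show "x \<in> {x\<in>space M. (n = 0 \<and> (\<forall>N. \<exists>k\<ge>N. P k x)) \<or> (\<exists>F\<in>{F. finite F \<and> card F = n}. \<forall>k. P k x = (k \<in> F))}"
    proof (cases "finite {k. P k x}")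
      case True
      then show ?thesis using x by (auto intro!: bexI[of _ "{k. P k x}"])
    next
      case False
      then show ?thesis using x by (auto simp: infinite_nat_iff_unbounded_le)
    qed
  next
    fix x assume "x \<in> {x\<in>space M. (n = 0 \<and> (\<forall>N. \<exists>k\<ge>N. P k x)) \<or> (\<exists>F\<in>{F. finite F \<and> card F = n}. \<forall>k. P k x = (k \<in> F))}"
    then show "x \<in> (\<lambda>x. card {k. P k x}) -` {n} \<inter> space M"
    proof (elim CollectE conjE disjE)
      assume a: "x \<in> space M" "n = 0" "\<forall>N. \<exists>k\<ge>N. P k x"
      then have "infinite {k. P k x}" by (simp add: infinite_nat_iff_unbounded_le)
      then show ?thesis using a by simp
    next
      assume "x \<in> space M" "\<exists>F\<in>{F. finite F \<and> card F = n}. \<forall>k. P k x = (k \<in> F)"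
      then obtain F where "finite F" "card F = n" "\<forall>k. P k x = (k \<in> F)" by auto
      then have "{k. P k x} = F" by auto
      with \<open>card F = n\<close> \<open>x \<in> space M\<close> show ?thesis by simp
    qed
  qed
  also have "\<dots> \<in> sets M"
    using c by measurable
  finally show "(\<lambda>x. card {k. P k x}) -` {n} \<inter> space M \<in> sets M" .
qed simp

lemma measurable_counting[measurable (raw)]:
  assumes [measurable]: "\<And>k. (\<lambda>x. PS (s x) k) \<in> borel_measurable M" "c \<in> borel_measurable M"
  shows "(\<lambda>x. counting (s x) (c x)) \<in> measurable M (count_space UNIV)"
  unfolding counting_PS by (rule measurable_card) measurable

lemma pred_stp[measurable (raw)]:
  assumes f: "f \<in> measurable M (count_space UNIV)" and g: "g \<in> measurable M (count_space UNIV)"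
  shows "Measurable.pred M (\<lambda>x. stp A z (f x) (g x))"
proof -
  have "Measurable.pred M (\<lambda>x. stp A z i (g x))" for i
    by (rule measurable_compose_countable[where f = "\<lambda>j x. stp A z i j" and g = g, OF _ g]) simp
  then show ?thesis
    by (rule measurable_compose_countable[where f = "\<lambda>i x. stp A z i (g x)" and g = f, OF _ f])
qed

lemma pred_stp2:
  assumes f: "f \<in> measurable M (count_space UNIV)" and g: "g \<in> measurable M (count_space UNIV)"
  shows "Measurable.pred M (\<lambda>x. stp A z (n + f x) (m + g x))"
proof -
  have "Measurable.pred M (\<lambda>x. stp A z (n + i) (m + g x))" for i
    by (rule measurable_compose_countable[where f = "\<lambda>j x. stp A z (n + i) (m + j)" and g = g, OF _ g]) simp
  then show ?thesis
    by (rule measurable_compose_countable[where f = "\<lambda>i x. stp A z (n + i) (m + g x)" and g = f, OF _ f])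
qed

lemma right_ok:
  "(\<exists>d>0. \<forall>t'. t < t' \<and> t' < t + d \<longrightarrow> counting s t' = counting s t) \<or>
   (finite {k. PS s k \<le> t} \<and> (INF k\<in>-{k. PS s k \<le> t}. PS s k) = t)"
proof (cases "finite {k. PS s k \<le> t}")
  case False
  have "counting s t' = counting s t" if "t < t'" for t'
  proof -
    have "{k. PS s k \<le> t} \<subseteq> {k. PS s k \<le> t'}" using that by auto
    then have "infinite {k. PS s k \<le> t'}" using False finite_subset by blast
    then show ?thesis using False unfolding counting_PS by simp
  qed
  then show ?thesis by (auto intro!: exI[of _ 1])
next
  case fin: True
  show ?thesis
  proof (cases "\<exists>d>0. \<forall>k. \<not> (t < PS s k \<and> PS s k < t + d)")
    case True
    then obtain d where d: "d > 0" "\<forall>k. \<not> (t < PS s k \<and> PS s k < t + d)" by auto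
    have "counting s t' = counting s t" if "t < t'" "t' < t + d" for t'
    proof -
      have "PS s k \<le> t' \<longleftrightarrow> PS s k \<le> t" for k
      proof -
        have "\<not> (t < PS s k \<and> PS s k < t + d)" using d by blast
        then show ?thesis using that by linarith
      qed
      then have "{k. PS s k \<le> t'} = {k. PS s k \<le> t}" by simp
      then show ?thesis unfolding counting_PS by simp
    qed
    then show ?thesis using d by auto
  next
    case False
    then have B: "\<And>d. d > 0 \<Longrightarrow> \<exists>k. t < PS s k \<and> PS s k < t + d" by auto
    let ?N = "{k. PS s k \<le> t}"
    have "infinite (UNIV - ?N)" using fin by (simp add: Diff_infinite_finite)
    then have ne: "- ?N \<noteq> {}" by (metis Compl_eq_Diff_UNIV finite.emptyI)
    have bdd: "bdd_below (PS s ` (- ?N))" by (rule bdd_belowI[of _ t]) auto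
    have ge: "t \<le> (INF k\<in>- ?N. PS s k)" using ne by (intro cINF_greatest) auto
    have le: "(INF k\<in>- ?N. PS s k) \<le> t"
    proof (rule ccontr)
      assume "\<not> (INF k\<in>- ?N. PS s k) \<le> t"
      then obtain k where k: "t < PS s k" "PS s k < t + ((INF k\<in>- ?N. PS s k) - t)"
        using B[of "(INF k\<in>- ?N. PS s k) - t"] by auto
      have "(INF k\<in>- ?N. PS s k) \<le> PS s k" using k(1) bdd by (intro cINF_lower) auto
      with k(2) show False by simp
    qed
    show ?thesis using fin ge le by auto
  qed
qed

definition candI :: "(rat + (nat set + nat set)) set" where
  "candI = range Inl \<union> Inr ` (Inl ` {F. finite F} \<union> Inr ` {F. finite F})"

lemma countable_candI: "countable candI"
  unfolding candI_def by (intro countable_Un countable_image countable_Collect_finite) auto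

definition cand :: "rat + (nat set + nat set) \<Rightarrow> real stream \<times> real stream \<Rightarrow> real" where
  "cand i w = (case i of Inl r \<Rightarrow> real_of_rat r
     | Inr (Inl F) \<Rightarrow> (INF k\<in>-F. PS (fst w) k) | Inr (Inr F) \<Rightarrow> (INF k\<in>-F. PS (snd w) k))"

lemma dense_cand:
  assumes t: "t \<in> hit A z n m w" and r: "t < r"
  shows "\<exists>i\<in>candI. cand i w \<in> hit A z n m w \<and> cand i w < r"
proof -
  obtain h a where w: "w = (h, a)" by (cases w)
  have hc: ?thesis if "finite {k. PS h k \<le> t}" "(INF k\<in>-{k. PS h k \<le> t}. PS h k) = t"
    using that t r by (intro bexI[of _ "Inr (Inl {k. PS h k \<le> t})"]) (auto simp: cand_def candI_def w)
  have ac: ?thesis if "finite {k. PS a k \<le> t}" "(INF k\<in>-{k. PS a k \<le> t}. PS a k) = t"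
    using that t r by (intro bexI[of _ "Inr (Inr {k. PS a k \<le> t})"]) (auto simp: cand_def candI_def w)
  have bc: ?thesis if dh: "dh > 0" "\<forall>t'. t < t' \<and> t' < t + dh \<longrightarrow> counting h t' = counting h t"
      and da: "da > 0" "\<forall>t'. t < t' \<and> t' < t + da \<longrightarrow> counting a t' = counting a t" for dh da
  proof -
    have "t < min (min (t + dh) (t + da)) r" using dh da r by simp
    from Rats_dense_in_real[OF this] obtain x where x: "x \<in> \<rat>" "t < x" "x < min (min (t + dh) (t + da)) r" by auto
    then obtain q where q: "x = real_of_rat q" by (auto simp: Rats_def)
    have "x \<in> hit A z n m w" using t x dh da by (auto simp: hit_def w)
    then show ?thesis using x q by (intro bexI[of _ "Inl q"]) (auto simp: cand_def candI_def)
  qed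
  show ?thesis using right_ok[of t h] right_ok[of t a] hc ac bc by blast
qed

lemma Tinf_INF:
  "Tinf A z n m w = (INF i\<in>candI. if cand i w \<in> hit A z n m w then ennreal (cand i w) else \<infinity>)"
proof (cases "hit A z n m w = {}")
  case True then show ?thesis by (simp add: Tinf_def)
next
  case False
  let ?H = "hit A z n m w"
  have bdd: "bdd_below ?H" by (rule bdd_belowI[of _ 0]) (simp add: hit_def)
  have "ennreal (Inf ?H) \<le> (if cand i w \<in> ?H then ennreal (cand i w) else \<infinity>)" for i
    using bdd by (auto intro: ennreal_leI cInf_lower)
  then have "ennreal (Inf ?H) \<le> (INF i\<in>candI. if cand i w \<in> ?H then ennreal (cand i w) else \<infinity>)"
    by (intro INF_greatest)
  moreover have "(INF i\<in>candI. if cand i w \<in> ?H then ennreal (cand i w) else \<infinity>) \<le> ennreal (Inf ?H)"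
  proof (rule ennreal_le_epsilon)
    fix e :: real assume e: "0 < e"
    have "Inf ?H < Inf ?H + e" using e by simp
    then obtain t where t: "t \<in> ?H" "t < Inf ?H + e" using cInf_lessD[OF False] by blast
    obtain i where i: "i \<in> candI" "cand i w \<in> ?H" "cand i w < Inf ?H + e"
      using dense_cand[OF t] by blast
    have "0 \<le> Inf ?H" using False by (intro cInf_greatest) (auto simp: hit_def)
    then have "(INF i\<in>candI. if cand i w \<in> ?H then ennreal (cand i w) else \<infinity>) \<le> ennreal (cand i w)"
      using i by (intro INF_lower2[OF i(1)]) simp
    also have "\<dots> \<le> ennreal (Inf ?H + e)" using i by (intro ennreal_leI) simp
    also have "\<dots> = ennreal (Inf ?H) + ennreal e" using e \<open>0 \<le> Inf ?H\<close> by (simp add: ennreal_plus)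
    finally show "(INF i\<in>candI. if cand i w \<in> ?H then ennreal (cand i w) else \<infinity>) \<le> ennreal (Inf ?H) + ennreal e" .
  qed
  ultimately show ?thesis using False by (simp add: Tinf_def)
qed

lemma measurable_Tinf[measurable]:
  "(\<lambda>w. Tinf A z n m w) \<in> borel_measurable (stream_space (exp_dist l1) \<Otimes>\<^sub>M stream_space (exp_dist l2))"
proof -
  have [measurable]: "(\<lambda>w. PS (fst w) k) \<in> borel_measurable (stream_space (exp_dist l1) \<Otimes>\<^sub>M stream_space (exp_dist l2))"
    "(\<lambda>w. PS (snd w) k) \<in> borel_measurable (stream_space (exp_dist l1) \<Otimes>\<^sub>M stream_space (exp_dist l2))" for k
    unfolding PS_def by measurable
  have [measurable]: "cand i \<in> borel_measurable (stream_space (exp_dist l1) \<Otimes>\<^sub>M stream_space (exp_dist l2))" for i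
  proof (cases i)
    case (Inl r) then show ?thesis by (simp add: cand_def[abs_def])
  next
    case (Inr j)
    have a: "(\<lambda>w. INF k\<in>-F. PS (fst w) k) \<in> borel_measurable (stream_space (exp_dist l1) \<Otimes>\<^sub>M stream_space (exp_dist l2))" for F
      by (rule borel_measurable_cINF_real) simp_all
    have b: "(\<lambda>w. INF k\<in>-F. PS (snd w) k) \<in> borel_measurable (stream_space (exp_dist l1) \<Otimes>\<^sub>M stream_space (exp_dist l2))" for F
      by (rule borel_measurable_cINF_real) simp_all
    show ?thesis using Inr a b by (cases j) (simp_all add: cand_def[abs_def])
  qed
  have pr: "Measurable.pred (stream_space (exp_dist l1) \<Otimes>\<^sub>M stream_space (exp_dist l2)) (\<lambda>w. cand i w \<in> hit A z n m w)" for i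
  proof -
    have c1: "(\<lambda>w. counting (fst w) (cand i w)) \<in> measurable (stream_space (exp_dist l1) \<Otimes>\<^sub>M stream_space (exp_dist l2)) (count_space UNIV)"
      by (rule measurable_counting) measurable
    have c2: "(\<lambda>w. counting (snd w) (cand i w)) \<in> measurable (stream_space (exp_dist l1) \<Otimes>\<^sub>M stream_space (exp_dist l2)) (count_space UNIV)"
      by (rule measurable_counting) measurable
    have P2: "Measurable.pred (stream_space (exp_dist l1) \<Otimes>\<^sub>M stream_space (exp_dist l2))
        (\<lambda>w. stp A z (n + counting (fst w) (cand i w)) (m + counting (snd w) (cand i w)))"
      by (rule pred_stp2[OF c1 c2])
    have P1: "Measurable.pred (stream_space (exp_dist l1) \<Otimes>\<^sub>M stream_space (exp_dist l2)) (\<lambda>w. 0 \<le> cand i w)"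
      by measurable
    show ?thesis unfolding hit_def mem_Collect_eq by (rule pred_intros_logic(3)[OF P1 P2])
  qed
  have G: "(\<lambda>w. if cand i w \<in> hit A z n m w then ennreal (cand i w) else \<infinity>) \<in> borel_measurable (stream_space (exp_dist l1) \<Otimes>\<^sub>M stream_space (exp_dist l2))" for i
    by (rule measurable_If[OF _ _ pr[unfolded pred_def]]) measurable
  show ?thesis
    unfolding Tinf_INF by (rule borel_measurable_INF[OF countable_candI G])
qed

lemma T'_Tinf: "T' A z w = (if Tinf A z 0 1 w = \<infinity> then Inf {} else enn2real (Tinf A z 0 1 w))"
proof -
  have "hit A z 0 1 w \<noteq> {} \<Longrightarrow> 0 \<le> Inf (hit A z 0 1 w)"
    by (intro cInf_greatest) (auto simp: hit_def)
  then show ?thesis unfolding T'_hit by (auto simp: Tinf_def)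
qed

lemma measurable_T'[measurable]:
  "T' A z \<in> borel_measurable (stream_space (exp_dist l1) \<Otimes>\<^sub>M stream_space (exp_dist l2))"
  unfolding T'_Tinf[abs_def] by measurable

lemma AE_exp_pos: "0 < l \<Longrightarrow> AE x in exp_dist l. 0 < x"
  unfolding exp_dist_def
  by (subst AE_density) (auto simp: erlang_density_def intro: AE_mp[OF AE_lborel_singleton[of 0]])

lemma exp_moment: "0 < l \<Longrightarrow> (\<integral>\<^sup>+x. ennreal x \<partial>exp_dist l) = ennreal (1 / l)"
proof -
  assume l: "0 < l"
  have "(\<integral>\<^sup>+x. ennreal x \<partial>exp_dist l) = (\<integral>\<^sup>+x. ennreal (exponential_density l x) * ennreal x \<partial>lborel)"
    by (rule nn_integral_exp_dist) measurable
  also have "\<dots> = (\<integral>\<^sup>+x. ennreal (exponential_density l x * x ^ 1) \<partial>lborel)"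
    by (intro nn_integral_cong) (auto simp: erlang_density_def ennreal_mult'' ennreal_neg)
  also have "\<dots> = ennreal (1 / l)"
    using nn_integral_erlang_ith_moment[OF l, of 0 1] by simp
  finally show ?thesis .
qed

lemma exp_laplace: "0 < l \<Longrightarrow> (\<integral>\<^sup>+x. ennreal (exp (- x)) \<partial>exp_dist l) = ennreal (l / (l + 1))"
proof -
  assume l: "0 < l"
  have "(\<integral>\<^sup>+x. ennreal (exp (- x)) \<partial>exp_dist l) = (\<integral>\<^sup>+x. ennreal (exponential_density l x) * ennreal (exp (- x)) \<partial>lborel)"
    by (rule nn_integral_exp_dist) measurable
  also have "\<dots> = (\<integral>\<^sup>+x. ennreal (l / (l + 1)) * ennreal (exponential_density (l + 1) x) \<partial>lborel)"
  proof (intro nn_integral_cong)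
    fix x :: real
    have "exponential_density l x * exp (- x * 1) = l / (l + 1) * exponential_density (l + 1) x"
      by (rule expd_scale[OF l]) simp
    moreover have "0 \<le> exponential_density l x" "0 \<le> exponential_density (l + 1) x"
      using l by (auto simp: erlang_density_def)
    ultimately show "ennreal (exponential_density l x) * ennreal (exp (- x)) = ennreal (l / (l + 1)) * ennreal (exponential_density (l + 1) x)"
      using l by (simp add: ennreal_mult[symmetric])
  qed
  also have "\<dots> = ennreal (l / (l + 1)) * (\<integral>\<^sup>+x. ennreal (exponential_density (l + 1) x) \<partial>lborel)"
    by (rule nn_integral_cmult) measurable
  also have "(\<integral>\<^sup>+x. ennreal (exponential_density (l + 1) x) \<partial>lborel) = 1"
  proof -
    interpret E: prob_space "exp_dist (l + 1)" using l by (intro exp_dist_prob) simp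
    have "(\<integral>\<^sup>+x. 1 \<partial>exp_dist (l + 1)) = 1" using E.emeasure_space_1 by simp
    moreover have "(\<integral>\<^sup>+x. 1 \<partial>exp_dist (l + 1)) = (\<integral>\<^sup>+x. ennreal (exponential_density (l + 1) x) * 1 \<partial>lborel)"
      by (rule nn_integral_exp_dist) measurable
    ultimately show ?thesis by simp
  qed
  finally show ?thesis by simp
qed

lemma AE_stream_pos: "0 < l \<Longrightarrow> AE s in stream_space (exp_dist l). \<forall>i. 0 < s !! i"
proof -
  assume l: "0 < l"
  interpret E: prob_space "exp_dist l" by (rule exp_dist_prob[OF l])
  have "AE s in stream_space (exp_dist l). stream_all (\<lambda>x. 0 < x) s"
    by (rule E.AE_stream_all) (simp_all add: AE_exp_pos[OF l])
  then show ?thesis unfolding stream_all_def by simp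
qed

lemma PS_meas[measurable]: "(\<lambda>s. PS s k) \<in> borel_measurable (stream_space (exp_dist l))"
  unfolding PS_def by measurable

lemma laplace_PS:
  assumes l: "0 < l"
  shows "(\<integral>\<^sup>+s. ennreal (exp (- PS s k)) \<partial>stream_space (exp_dist l)) = ennreal (l / (l + 1)) ^ Suc k"
proof (induction k)
  interpret E: prob_space "exp_dist l" by (rule exp_dist_prob[OF l])
  interpret S: prob_space "stream_space (exp_dist l)" by (rule E.prob_space_stream_space)
  case 0
  have "(\<integral>\<^sup>+s. ennreal (exp (- PS s 0)) \<partial>stream_space (exp_dist l))
      = (\<integral>\<^sup>+x. \<integral>\<^sup>+s. ennreal (exp (- PS (x ## s) 0)) \<partial>stream_space (exp_dist l) \<partial>exp_dist l)"
    by (rule E.nn_integral_stream_space) measurable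
  also have "\<dots> = (\<integral>\<^sup>+x. ennreal (exp (- x)) \<partial>exp_dist l)" using S.emeasure_space_1 by simp
  finally show ?case using exp_laplace[OF l] by simp
next
  interpret E: prob_space "exp_dist l" by (rule exp_dist_prob[OF l])
  interpret S: prob_space "stream_space (exp_dist l)" by (rule E.prob_space_stream_space)
  case (Suc k)
  have "(\<integral>\<^sup>+s. ennreal (exp (- PS s (Suc k))) \<partial>stream_space (exp_dist l))
      = (\<integral>\<^sup>+x. \<integral>\<^sup>+s. ennreal (exp (- PS (x ## s) (Suc k))) \<partial>stream_space (exp_dist l) \<partial>exp_dist l)"
    by (rule E.nn_integral_stream_space) measurable
  also have "\<dots> = (\<integral>\<^sup>+x. ennreal (exp (- x)) * (\<integral>\<^sup>+s. ennreal (exp (- PS s k)) \<partial>stream_space (exp_dist l)) \<partial>exp_dist l)"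
  proof (intro nn_integral_cong)
    fix x
    have "(\<integral>\<^sup>+s. ennreal (exp (- PS (x ## s) (Suc k))) \<partial>stream_space (exp_dist l))
        = (\<integral>\<^sup>+s. ennreal (exp (- x)) * ennreal (exp (- PS s k)) \<partial>stream_space (exp_dist l))"
      by (intro nn_integral_cong) (simp add: ennreal_mult[symmetric] exp_add[symmetric])
    also have "\<dots> = ennreal (exp (- x)) * (\<integral>\<^sup>+s. ennreal (exp (- PS s k)) \<partial>stream_space (exp_dist l))"
      by (rule nn_integral_cmult) measurable
    finally show "(\<integral>\<^sup>+s. ennreal (exp (- PS (x ## s) (Suc k))) \<partial>stream_space (exp_dist l))
        = ennreal (exp (- x)) * (\<integral>\<^sup>+s. ennreal (exp (- PS s k)) \<partial>stream_space (exp_dist l))" .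
  qed
  also have "\<dots> = (\<integral>\<^sup>+x. ennreal (exp (- x)) \<partial>exp_dist l) * (\<integral>\<^sup>+s. ennreal (exp (- PS s k)) \<partial>stream_space (exp_dist l))"
    by (rule nn_integral_multc) measurable
  finally show ?case using exp_laplace[OF l] Suc by simp
qed

lemma AE_zero_of_bound:
  fixes Y :: "'a \<Rightarrow> ennreal" and c :: real
  assumes Y[measurable]: "Y \<in> borel_measurable M" and c: "0 \<le> c" "c < 1"
    and bd: "\<And>k. (\<integral>\<^sup>+x. Y x \<partial>M) \<le> ennreal c ^ Suc k"
  shows "AE x in M. Y x = 0"
proof -
  have lim: "(\<lambda>k. ennreal c ^ Suc k) \<longlonglongrightarrow> 0"
  proof -
    have "(\<lambda>k. c ^ Suc k) \<longlonglongrightarrow> 0" using c by (intro LIMSEQ_Suc[OF LIMSEQ_power_zero]) auto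
    then have "(\<lambda>k. ennreal (c ^ Suc k)) \<longlonglongrightarrow> ennreal 0" by (rule tendsto_ennrealI)
    moreover have "ennreal c ^ Suc k = ennreal (c ^ Suc k)" for k using c by (simp add: ennreal_power ennreal_mult)
    ultimately show ?thesis by simp
  qed
  have "(\<integral>\<^sup>+x. Y x \<partial>M) \<le> 0"
    by (rule LIMSEQ_le_const[OF lim]) (use bd in auto)
  then have "(\<integral>\<^sup>+x. Y x \<partial>M) = 0" by simp
  then show ?thesis by (subst (asm) nn_integral_0_iff_AE) auto
qed

lemma AE_stream_div: "0 < l \<Longrightarrow> AE s in stream_space (exp_dist l). \<forall>t. \<exists>k. t < PS s k"
proof -
  assume l: "0 < l"
  define Y where "Y s = (INF k. ennreal (exp (- PS s k)))" for s
  have "AE s in stream_space (exp_dist l). Y s = 0"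
  proof (rule AE_zero_of_bound[of _ _ "l / (l + 1)"])
    show "Y \<in> borel_measurable (stream_space (exp_dist l))" unfolding Y_def by measurable
    show "0 \<le> l / (l + 1)" "l / (l + 1) < 1" using l by auto
    fix k
    have "(\<integral>\<^sup>+s. Y s \<partial>stream_space (exp_dist l)) \<le> (\<integral>\<^sup>+s. ennreal (exp (- PS s k)) \<partial>stream_space (exp_dist l))"
      unfolding Y_def by (intro nn_integral_mono INF_lower) auto
    then show "(\<integral>\<^sup>+s. Y s \<partial>stream_space (exp_dist l)) \<le> ennreal (l / (l + 1)) ^ Suc k"
      using laplace_PS[OF l, of k] by simp
  qed
  then show ?thesis
  proof (rule AE_mp, intro AE_I2 impI allI)
    fix s t assume "Y s = 0"
    then have "(INF k. ennreal (exp (- PS s k))) < ennreal (exp (- t))" by (simp add: Y_def)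
    then obtain k where "ennreal (exp (- PS s k)) < ennreal (exp (- t))" by (auto simp: INF_less_iff)
    then have "exp (- PS s k) < exp (- t)" by (simp add: ennreal_less_iff)
    then show "\<exists>k. t < PS s k" by auto
  qed
qed

lemma divg_of: "nonneg s \<Longrightarrow> \<forall>t. \<exists>k. t < PS s k \<Longrightarrow> divg s"
  unfolding divg_def
proof
  fix t assume n: "nonneg s" and d: "\<forall>t. \<exists>k. t < PS s k"
  then obtain K where K: "t < PS s K" by auto
  have "{k. PS s k \<le> t} \<subseteq> {..<K}"
  proof
    fix k assume "k \<in> {k. PS s k \<le> t}"
    then have "PS s k \<le> t" by simp
    then show "k \<in> {..<K}" using K PS_mono[OF n, of K k] by (cases "K \<le> k") auto
  qed
  then show "finite {k. PS s k \<le> t}" by (rule finite_subset) simp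
qed

definition sgood :: "real stream \<Rightarrow> bool" where
  "sgood s \<longleftrightarrow> nonneg s \<and> divg s \<and> 0 < shd s"

lemma AE_sgood: "0 < l \<Longrightarrow> AE s in stream_space (exp_dist l). sgood s"
  using AE_stream_pos AE_stream_div
proof -
  assume l: "0 < l"
  show ?thesis using AE_stream_pos[OF l] AE_stream_div[OF l]
  proof eventually_elim
    case (elim s)
    then have "nonneg s" by (auto simp: nonneg_def less_imp_le)
    with elim show ?case by (auto simp: sgood_def intro: divg_of) (metis snth.simps(1))
  qed
qed

fun Sk :: "nat \<Rightarrow> real stream \<times> real stream \<Rightarrow> ennreal" where
  "Sk 0 w = 0"
| "Sk (Suc k) w = ennreal (el w) + Sk k (stepw w)"

fun Skr :: "nat \<Rightarrow> real stream \<times> real stream \<Rightarrow> real" where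
  "Skr 0 w = 0"
| "Skr (Suc k) w = el w + Skr k (stepw w)"

fun VV :: "real \<Rightarrow> nat \<Rightarrow> nat \<Rightarrow> nat \<Rightarrow> nat \<Rightarrow> nat \<Rightarrow> real" where
  "VV q A z 0 n m = 0"
| "VV q A z (Suc k) n m = (if stp A z n m then 0 else 1 + (1 - q) * VV q A z k (Suc n) m + q * VV q A z k n (Suc m))"

lemma VV_nonneg: "0 \<le> q \<Longrightarrow> q \<le> 1 \<Longrightarrow> 0 \<le> VV q A z k n m"
  by (induction k arbitrary: n m) auto

lemma Sk_mono: "Sk k w \<le> Sk (Suc k) w"
proof (induction k arbitrary: w)
  case 0 then show ?case by simp
next
  case (Suc k) then show ?case by (simp add: add_left_mono)
qed

lemma nonneg_Cons: "nonneg (y ## s) \<longleftrightarrow> 0 \<le> y \<and> nonneg s"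
  unfolding nonneg_def
proof safe
  fix i assume "\<forall>i. 0 \<le> (y ## s) !! i"
  then show "0 \<le> y" "0 \<le> s !! i" by (metis snth.simps(1) stream.sel(1), metis snth.simps(2) stream.sel(2))
next
  fix i assume "0 \<le> y" "\<forall>i. 0 \<le> s !! i"
  then show "0 \<le> (y ## s) !! i" by (cases i) auto
qed

lemma nonneg_stepw: "nonneg (fst w) \<Longrightarrow> nonneg (snd w) \<Longrightarrow> nonneg (fst (stepw w)) \<and> nonneg (snd (stepw w))"
  unfolding stepw_def using nonneg_stl nonneg_shd by (auto simp: nonneg_Cons)

lemma el_nonneg: "nonneg (fst w) \<Longrightarrow> nonneg (snd w) \<Longrightarrow> 0 \<le> el w"
  unfolding el_def using nonneg_shd by (simp add: min_def)

lemma Sk_Skr: "nonneg (fst w) \<Longrightarrow> nonneg (snd w) \<Longrightarrow> Sk k w = ennreal (Skr k w) \<and> 0 \<le> Skr k w"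
proof (induction k arbitrary: w)
  case 0 then show ?case by simp
next
  case (Suc k)
  from Suc.IH[of "stepw w"] nonneg_stepw[OF Suc.prems] have ih: "Sk k (stepw w) = ennreal (Skr k (stepw w))" "0 \<le> Skr k (stepw w)" by auto
  have "0 \<le> el w" using el_nonneg[OF Suc.prems] .
  with ih show ?case by (simp add: ennreal_plus)
qed

context mining
begin

lemma measurable_el[measurable]: "el \<in> borel_measurable \<Omega>"
  unfolding el_def by measurable

lemma measurable_stepw[measurable]: "stepw \<in> measurable \<Omega> \<Omega>"
  unfolding stepw_def by measurable

lemma measurable_Sk[measurable]: "Sk k \<in> borel_measurable \<Omega>"
  by (induction k) (simp_all add: measurable_compose[OF measurable_stepw])

lemma measurable_Skr[measurable]: "Skr k \<in> borel_measurable \<Omega>"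
  by (induction k) (simp_all add: measurable_compose[OF measurable_stepw])

lemma AE_fst: "AE h in M1. P h \<Longrightarrow> AE w in \<Omega>. P (fst w)"
proof -
  assume a: "AE h in M1. P h"
  obtain N where N: "{h \<in> space M1. \<not> P h} \<subseteq> N" "emeasure M1 N = 0" "N \<in> sets M1" using a by (rule AE_E)
  show ?thesis
  proof (rule AE_I')
    have "N \<times> space M2 \<in> sets \<Omega>" by (rule pair_measureI[OF N(3) sets.top])
    moreover have "emeasure \<Omega> (N \<times> space M2) = 0"
      using S2.emeasure_pair_measure_Times[OF N(3) sets.top] N(2) by simp
    ultimately show "N \<times> space M2 \<in> null_sets \<Omega>" by (simp only: null_sets_def mem_Collect_eq)
    show "{w \<in> space \<Omega>. \<not> P (fst w)} \<subseteq> N \<times> space M2"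
      using N(1) by (auto simp: space_pair_measure)
  qed
qed

lemma AE_snd: "AE a in M2. P a \<Longrightarrow> AE w in \<Omega>. P (snd w)"
proof -
  assume a: "AE a in M2. P a"
  obtain N where N: "{h \<in> space M2. \<not> P h} \<subseteq> N" "emeasure M2 N = 0" "N \<in> sets M2" using a by (rule AE_E)
  show ?thesis
  proof (rule AE_I')
    have "space M1 \<times> N \<in> sets \<Omega>" by (rule pair_measureI[OF sets.top N(3)])
    moreover have "emeasure \<Omega> (space M1 \<times> N) = 0"
      using S2.emeasure_pair_measure_Times[OF sets.top[of M1] N(3)] N(2) by simp
    ultimately show "space M1 \<times> N \<in> null_sets \<Omega>" by (simp only: null_sets_def mem_Collect_eq)
    show "{w \<in> space \<Omega>. \<not> P (snd w)} \<subseteq> space M1 \<times> N"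
      using N(1) by (auto simp: space_pair_measure)
  qed
qed

lemma AE_good: "AE w in \<Omega>. sgood (fst w) \<and> sgood (snd w)"
  using AE_fst[OF AE_sgood[OF lh_pos]] AE_snd[OF AE_sgood[OF la_pos]] by eventually_elim auto

lemma Phih_props:
  assumes "0 \<le> u" "0 < shd (snd w)"
  shows "el (Phih u w) = u" "shd (fst (Phih u w)) < shd (snd (Phih u w))" "stepw (Phih u w) = w"
  using assms by (auto simp: Phih_def el_def stepw_def)

lemma Phia_props:
  assumes "0 \<le> u" "0 < shd (fst w)"
  shows "el (Phia u w) = u" "\<not> shd (fst (Phia u w)) < shd (snd (Phia u w))" "stepw (Phia u w) = w"
  using assms by (auto simp: Phia_def el_def stepw_def)

end

lemma min_add_ennreal: "min (x + a) (x + b) = (x::ennreal) + min a b"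
  by (cases "a \<le> b") (auto simp: min_def add_left_mono intro: antisym add_left_mono)

lemma step_eq:
  assumes g: "sgood (fst w)" "sgood (snd w)"
  shows "min (Tinf A z n m w) (Sk (Suc k) w) = (if stp A z n m then 0 else ennreal (el w) +
     (if shd (fst w) < shd (snd w) then min (Tinf A z (Suc n) m (stepw w)) (Sk k (stepw w))
      else min (Tinf A z n (Suc m) (stepw w)) (Sk k (stepw w))))"
proof (cases "stp A z n m")
  case True
  have "Tinf A z n m w = 0" using g True by (intro stp_0) (auto simp: sgood_def)
  then show ?thesis using True by simp
next
  case False
  have gd: "good w" using g by (simp add: good_def sgood_def)
  show ?thesis unfolding Tinf_step[OF gd False] using False by (auto simp: min_add_ennreal)
qed

context mining
begin

lemma El_mean: "(\<integral>\<^sup>+u. ennreal u \<partial>El) = ennreal tau0"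
  using exp_moment[OF ll_pos] by simp

lemma AE_El_pos: "AE u in El. 0 < u" by (rule AE_exp_pos[OF ll_pos])

lemma nn_const_Om: "(\<integral>\<^sup>+w. c \<partial>\<Omega>) = c"
  using P.emeasure_space_1 by simp

lemma int_Phih:
  assumes Gh[measurable]: "Gh \<in> borel_measurable \<Omega>" and Ga[measurable]: "Ga \<in> borel_measurable \<Omega>"
  shows "(\<integral>\<^sup>+u. \<integral>\<^sup>+w. ennreal (el (Phih u w)) + (if shd (fst (Phih u w)) < shd (snd (Phih u w))
      then Gh (stepw (Phih u w)) else Ga (stepw (Phih u w))) \<partial>\<Omega> \<partial>El) = ennreal tau0 + (\<integral>\<^sup>+w. Gh w \<partial>\<Omega>)"
proof -
  have "(\<integral>\<^sup>+u. \<integral>\<^sup>+w. ennreal (el (Phih u w)) + (if shd (fst (Phih u w)) < shd (snd (Phih u w))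
      then Gh (stepw (Phih u w)) else Ga (stepw (Phih u w))) \<partial>\<Omega> \<partial>El)
    = (\<integral>\<^sup>+u. ennreal u + (\<integral>\<^sup>+w. Gh w \<partial>\<Omega>) \<partial>El)"
  proof (rule nn_integral_cong_AE)
    show "AE u in El. (\<integral>\<^sup>+w. ennreal (el (Phih u w)) + (if shd (fst (Phih u w)) < shd (snd (Phih u w))
      then Gh (stepw (Phih u w)) else Ga (stepw (Phih u w))) \<partial>\<Omega>) = ennreal u + (\<integral>\<^sup>+w. Gh w \<partial>\<Omega>)"
      using AE_El_pos
    proof eventually_elim
      case (elim u)
      have "(\<integral>\<^sup>+w. ennreal (el (Phih u w)) + (if shd (fst (Phih u w)) < shd (snd (Phih u w))
          then Gh (stepw (Phih u w)) else Ga (stepw (Phih u w))) \<partial>\<Omega>) = (\<integral>\<^sup>+w. ennreal u + Gh w \<partial>\<Omega>)"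
        using AE_good
      proof (intro nn_integral_cong_AE, eventually_elim)
        case (elim w)
        then have "0 < shd (snd w)" by (simp add: sgood_def)
        with \<open>0 < u\<close> show ?case using Phih_props[of u w] by simp
      qed
      also have "\<dots> = ennreal u + (\<integral>\<^sup>+w. Gh w \<partial>\<Omega>)"
        by (subst nn_integral_add) (simp_all add: nn_const_Om P.emeasure_space_1)
      finally show ?case .
    qed
  qed
  also have "\<dots> = ennreal tau0 + (\<integral>\<^sup>+w. Gh w \<partial>\<Omega>)"
    by (subst nn_integral_add) (simp_all add: El_mean El.emeasure_space_1[simplified])
  finally show ?thesis .
qed

lemma int_Phia:
  assumes Gh[measurable]: "Gh \<in> borel_measurable \<Omega>" and Ga[measurable]: "Ga \<in> borel_measurable \<Omega>"
  shows "(\<integral>\<^sup>+u. \<integral>\<^sup>+w. ennreal (el (Phia u w)) + (if shd (fst (Phia u w)) < shd (snd (Phia u w))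
      then Gh (stepw (Phia u w)) else Ga (stepw (Phia u w))) \<partial>\<Omega> \<partial>El) = ennreal tau0 + (\<integral>\<^sup>+w. Ga w \<partial>\<Omega>)"
proof -
  have "(\<integral>\<^sup>+u. \<integral>\<^sup>+w. ennreal (el (Phia u w)) + (if shd (fst (Phia u w)) < shd (snd (Phia u w))
      then Gh (stepw (Phia u w)) else Ga (stepw (Phia u w))) \<partial>\<Omega> \<partial>El)
    = (\<integral>\<^sup>+u. ennreal u + (\<integral>\<^sup>+w. Ga w \<partial>\<Omega>) \<partial>El)"
  proof (rule nn_integral_cong_AE)
    show "AE u in El. (\<integral>\<^sup>+w. ennreal (el (Phia u w)) + (if shd (fst (Phia u w)) < shd (snd (Phia u w))
      then Gh (stepw (Phia u w)) else Ga (stepw (Phia u w))) \<partial>\<Omega>) = ennreal u + (\<integral>\<^sup>+w. Ga w \<partial>\<Omega>)"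
      using AE_El_pos
    proof eventually_elim
      case (elim u)
      have "(\<integral>\<^sup>+w. ennreal (el (Phia u w)) + (if shd (fst (Phia u w)) < shd (snd (Phia u w))
          then Gh (stepw (Phia u w)) else Ga (stepw (Phia u w))) \<partial>\<Omega>) = (\<integral>\<^sup>+w. ennreal u + Ga w \<partial>\<Omega>)"
        using AE_good
      proof (intro nn_integral_cong_AE, eventually_elim)
        case (elim w)
        then have "0 < shd (fst w)" by (simp add: sgood_def)
        with \<open>0 < u\<close> show ?case using Phia_props[of u w] by simp
      qed
      also have "\<dots> = ennreal u + (\<integral>\<^sup>+w. Ga w \<partial>\<Omega>)"
        by (subst nn_integral_add) (simp_all add: nn_const_Om P.emeasure_space_1)
      finally show ?case .
    qed
  qed
  also have "\<dots> = ennreal tau0 + (\<integral>\<^sup>+w. Ga w \<partial>\<Omega>)"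
    by (subst nn_integral_add) (simp_all add: El_mean El.emeasure_space_1[simplified])
  finally show ?thesis .
qed

lemma trunc: "(\<integral>\<^sup>+w. min (Tinf A z n m w) (Sk k w) \<partial>\<Omega>) = ennreal (tau0 * VV q A z k n m)"
proof (induction k arbitrary: n m)
  case 0 then show ?case by simp
next
  case (Suc k)
  define Gh where "Gh w = min (Tinf A z (Suc n) m w) (Sk k w)" for w
  define Ga where "Ga w = min (Tinf A z n (Suc m) w) (Sk k w)" for w
  have [measurable]: "Gh \<in> borel_measurable \<Omega>" "Ga \<in> borel_measurable \<Omega>"
    unfolding Gh_def Ga_def by measurable
  have "(\<integral>\<^sup>+w. min (Tinf A z n m w) (Sk (Suc k) w) \<partial>\<Omega>)
     = (\<integral>\<^sup>+w. (if stp A z n m then 0 else ennreal (el w) +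
        (if shd (fst w) < shd (snd w) then Gh (stepw w) else Ga (stepw w))) \<partial>\<Omega>)"
    using AE_good
  proof (intro nn_integral_cong_AE, eventually_elim)
    case (elim w)
    then show ?case using step_eq[of w A z n m k] by (simp add: Gh_def Ga_def del: Sk.simps)
  qed
  also have "\<dots> = ennreal (tau0 * VV q A z (Suc k) n m)"
  proof (cases "stp A z n m")
    case True then show ?thesis by simp
  next
    case False
    have "(\<integral>\<^sup>+w. ennreal (el w) + (if shd (fst w) < shd (snd w) then Gh (stepw w) else Ga (stepw w)) \<partial>\<Omega>)
      = ennreal (1 - q) * (ennreal tau0 + (\<integral>\<^sup>+w. Gh w \<partial>\<Omega>)) + ennreal q * (ennreal tau0 + (\<integral>\<^sup>+w. Ga w \<partial>\<Omega>))"
      by (subst decomp) (measurable, simp add: int_Phih int_Phia)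
    also have "\<dots> = ennreal (1 - q) * (ennreal tau0 + ennreal (tau0 * VV q A z k (Suc n) m))
        + ennreal q * (ennreal tau0 + ennreal (tau0 * VV q A z k n (Suc m)))"
      using Suc.IH unfolding Gh_def Ga_def by simp
    also have "\<dots> = ennreal ((1 - q) * (tau0 + tau0 * VV q A z k (Suc n) m) + q * (tau0 + tau0 * VV q A z k n (Suc m)))"
    proof -
      have v: "0 \<le> VV q A z k (Suc n) m" "0 \<le> VV q A z k n (Suc m)" using q0 q1 by (auto intro: VV_nonneg)
      then show ?thesis using q0 q1 t0
        by (simp add: ennreal_plus[symmetric] ennreal_mult[symmetric] del: ennreal_plus)
    qed
    also have "(1 - q) * (tau0 + tau0 * VV q A z k (Suc n) m) + q * (tau0 + tau0 * VV q A z k n (Suc m))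
        = tau0 * VV q A z (Suc k) n m"
      using False by (simp add: algebra_simps)
    finally show ?thesis using False by simp
  qed
  finally show ?case .
qed

end

context mining
begin

definition "r0 = (1 / tau0) / (1 / tau0 + 1)"

lemma r0_eq: "r0 = 1 / (1 + tau0)"
  unfolding r0_def using t0 by (simp add: field_simps)

lemma r0: "0 \<le> r0" "r0 < 1" using t0 unfolding r0_eq by auto

lemma El_lap: "(\<integral>\<^sup>+u. ennreal (exp (- u)) \<partial>El) = ennreal r0"
  unfolding r0_def by (rule exp_laplace[OF ll_pos])

lemma lap_Skr: "(\<integral>\<^sup>+w. ennreal (exp (- Skr k w)) \<partial>\<Omega>) = ennreal r0 ^ k"
proof (induction k)
  case 0 then show ?case using P.emeasure_space_1 by simp
next
  case (Suc k)
  define G where "G w = ennreal (exp (- Skr k w))" for w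
  have [measurable]: "G \<in> borel_measurable \<Omega>" unfolding G_def by measurable
  have e: "ennreal (exp (- Skr (Suc k) w)) = ennreal (exp (- el w)) * G (stepw w)" for w
    by (simp add: G_def ennreal_mult[symmetric] exp_add[symmetric])
  have ph: "(\<integral>\<^sup>+u. \<integral>\<^sup>+w. ennreal (exp (- el (Phih u w))) * G (stepw (Phih u w)) \<partial>\<Omega> \<partial>El) = ennreal r0 * ennreal r0 ^ k"
  proof -
    have "(\<integral>\<^sup>+u. \<integral>\<^sup>+w. ennreal (exp (- el (Phih u w))) * G (stepw (Phih u w)) \<partial>\<Omega> \<partial>El)
        = (\<integral>\<^sup>+u. ennreal (exp (- u)) * ennreal r0 ^ k \<partial>El)"
    proof (rule nn_integral_cong_AE)
      show "AE u in El. (\<integral>\<^sup>+w. ennreal (exp (- el (Phih u w))) * G (stepw (Phih u w)) \<partial>\<Omega>) = ennreal (exp (- u)) * ennreal r0 ^ k"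
        using AE_El_pos
      proof eventually_elim
        case (elim u)
        have "(\<integral>\<^sup>+w. ennreal (exp (- el (Phih u w))) * G (stepw (Phih u w)) \<partial>\<Omega>) = (\<integral>\<^sup>+w. ennreal (exp (- u)) * G w \<partial>\<Omega>)"
          using AE_good
        proof (intro nn_integral_cong_AE, eventually_elim)
          case (elim w)
          then have "0 < shd (snd w)" by (simp add: sgood_def)
          with \<open>0 < u\<close> show ?case using Phih_props[of u w] by simp
        qed
        also have "\<dots> = ennreal (exp (- u)) * ennreal r0 ^ k"
          by (subst nn_integral_cmult) (simp_all add: Suc.IH[unfolded G_def[symmetric]])
        finally show ?case .
      qed
    qed
    also have "\<dots> = ennreal r0 * ennreal r0 ^ k"
      by (subst nn_integral_multc) (simp_all add: El_lap)
    finally show ?thesis .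
  qed
  have pa: "(\<integral>\<^sup>+u. \<integral>\<^sup>+w. ennreal (exp (- el (Phia u w))) * G (stepw (Phia u w)) \<partial>\<Omega> \<partial>El) = ennreal r0 * ennreal r0 ^ k"
  proof -
    have "(\<integral>\<^sup>+u. \<integral>\<^sup>+w. ennreal (exp (- el (Phia u w))) * G (stepw (Phia u w)) \<partial>\<Omega> \<partial>El)
        = (\<integral>\<^sup>+u. ennreal (exp (- u)) * ennreal r0 ^ k \<partial>El)"
    proof (rule nn_integral_cong_AE)
      show "AE u in El. (\<integral>\<^sup>+w. ennreal (exp (- el (Phia u w))) * G (stepw (Phia u w)) \<partial>\<Omega>) = ennreal (exp (- u)) * ennreal r0 ^ k"
        using AE_El_pos
      proof eventually_elim
        case (elim u)
        have "(\<integral>\<^sup>+w. ennreal (exp (- el (Phia u w))) * G (stepw (Phia u w)) \<partial>\<Omega>) = (\<integral>\<^sup>+w. ennreal (exp (- u)) * G w \<partial>\<Omega>)"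
          using AE_good
        proof (intro nn_integral_cong_AE, eventually_elim)
          case (elim w)
          then have "0 < shd (fst w)" by (simp add: sgood_def)
          with \<open>0 < u\<close> show ?case using Phia_props[of u w] by simp
        qed
        also have "\<dots> = ennreal (exp (- u)) * ennreal r0 ^ k"
          by (subst nn_integral_cmult) (simp_all add: Suc.IH[unfolded G_def[symmetric]])
        finally show ?case .
      qed
    qed
    also have "\<dots> = ennreal r0 * ennreal r0 ^ k"
      by (subst nn_integral_multc) (simp_all add: El_lap)
    finally show ?thesis .
  qed
  have "(\<integral>\<^sup>+w. ennreal (exp (- Skr (Suc k) w)) \<partial>\<Omega>) = (\<integral>\<^sup>+w. ennreal (exp (- el w)) * G (stepw w) \<partial>\<Omega>)"
    unfolding e ..
  also have "\<dots> = ennreal (1 - q) * (ennreal r0 * ennreal r0 ^ k) + ennreal q * (ennreal r0 * ennreal r0 ^ k)"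
    by (subst decomp) (measurable, simp only: ph pa)
  also have "\<dots> = (ennreal (1 - q) + ennreal q) * (ennreal r0 * ennreal r0 ^ k)"
    by (simp add: distrib_right)
  also have "ennreal (1 - q) + ennreal q = 1" using q0 q1 by (simp add: ennreal_plus[symmetric] del: ennreal_plus)
  finally show ?case by simp
qed

lemma Sk_div: "AE w in \<Omega>. (SUP k. Sk k w) = \<top>"
proof -
  define Y where "Y w = (INF k. ennreal (exp (- Skr k w)))" for w
  have "AE w in \<Omega>. Y w = 0"
  proof (rule AE_zero_of_bound[OF _ r0])
    show "Y \<in> borel_measurable \<Omega>" unfolding Y_def by measurable
    fix k
    have "(\<integral>\<^sup>+w. Y w \<partial>\<Omega>) \<le> (\<integral>\<^sup>+w. ennreal (exp (- Skr (Suc k) w)) \<partial>\<Omega>)"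
      unfolding Y_def by (intro nn_integral_mono INF_lower) auto
    then show "(\<integral>\<^sup>+w. Y w \<partial>\<Omega>) \<le> ennreal r0 ^ Suc k" using lap_Skr[of "Suc k"] by simp
  qed
  then show ?thesis using AE_good
  proof eventually_elim
    case (elim w)
    have nn: "nonneg (fst w)" "nonneg (snd w)" using elim by (auto simp: sgood_def)
    show ?case
    proof (rule ennreal_SUP_eq_top)
      fix N :: nat
      have "(INF k. ennreal (exp (- Skr k w))) < ennreal (exp (- real N))" using elim by (simp add: Y_def)
      then obtain k where "ennreal (exp (- Skr k w)) < ennreal (exp (- real N))" by (auto simp: INF_less_iff)
      then have "exp (- Skr k w) < exp (- real N)" by (simp add: ennreal_less_iff)
      then have "real N < Skr k w" by simp
      moreover have "Sk k w = ennreal (Skr k w)" using Sk_Skr[OF nn] by simp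
      ultimately have "of_nat N \<le> Sk k w" by (simp add: ennreal_of_nat_eq_real_of_nat ennreal_leI)
      then show "\<exists>k\<in>UNIV. of_nat N \<le> Sk k w" by blast
    qed
  qed
qed

lemma Tinf_lim: "(\<integral>\<^sup>+w. Tinf A z n m w \<partial>\<Omega>) = (SUP k. ennreal (tau0 * VV q A z k n m))"
proof -
  have "(\<integral>\<^sup>+w. Tinf A z n m w \<partial>\<Omega>) = (\<integral>\<^sup>+w. (SUP k. min (Tinf A z n m w) (Sk k w)) \<partial>\<Omega>)"
    using Sk_div
  proof (intro nn_integral_cong_AE, eventually_elim)
    case (elim w)
    have "(SUP k. min (Tinf A z n m w) (Sk k w)) = min (Tinf A z n m w) (SUP k. Sk k w)"
      by (simp add: inf_min[symmetric] inf_SUP)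
    then show ?case using elim by simp
  qed
  also have "\<dots> = (SUP k. (\<integral>\<^sup>+w. min (Tinf A z n m w) (Sk k w) \<partial>\<Omega>))"
  proof (rule nn_integral_monotone_convergence_SUP)
    show "incseq (\<lambda>k w. min (Tinf A z n m w) (Sk k w))"
      by (intro incseq_SucI le_funI min.mono order.refl Sk_mono)
  qed measurable
  also have "\<dots> = (SUP k. ennreal (tau0 * VV q A z k n m))" by (simp add: trunc)
  finally show ?thesis .
qed

end

theorem proposition2:
  fixes q p lam tau0 :: real and z A :: nat
  assumes "0 < q" "q < 1/2" "p = 1 - q" "lam = q / p" "0 < tau0" "1 \<le> z" "z \<le> A"
  shows "(\<integral>\<omega>. T' A z \<omega> \<partial>mining_space q tau0) / tau0 =
     (A + 1) / (p - q) * (1 / (1 - lam ^ (A + 1)))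
     - p ^ (z - 1) * q ^ z / ((p - q) * beta_fn z z)
     + (z / p - 2 * (A + 1) / ((p - q) * (1 - lam ^ (A + 1)))) * inc_beta q z z"
proof -
  interpret M: mining q tau0 using assms by unfold_locales auto
  interpret C: chain p q A z using assms by unfold_locales auto
  have VV_eq: "VV q A z k n m = C.Vk k n m" for k n m
    by (induction k arbitrary: n m) (simp_all add: C.stopped_def stp_def assms(3)[symmetric])
  have V0: "0 \<le> C.V 0 1"
    using C.Vk_lim[of 0 1] C.Vk_nonneg by (intro LIMSEQ_le_const) auto
  have sup: "(SUP k. ennreal (tau0 * VV q A z k 0 1)) = ennreal (tau0 * C.V 0 1)"
  proof (rule LIMSEQ_unique)
    show "(\<lambda>k. ennreal (tau0 * VV q A z k 0 1)) \<longlonglongrightarrow> (SUP k. ennreal (tau0 * VV q A z k 0 1))"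
    proof (rule LIMSEQ_SUP, rule incseq_SucI)
      fix k show "ennreal (tau0 * VV q A z k 0 1) \<le> ennreal (tau0 * VV q A z (Suc k) 0 1)"
        unfolding VV_eq using C.Vk_mono[of k 0 1] assms(5) by (intro ennreal_leI mult_left_mono) auto
    qed
    show "(\<lambda>k. ennreal (tau0 * VV q A z k 0 1)) \<longlonglongrightarrow> ennreal (tau0 * C.V 0 1)"
      unfolding VV_eq by (intro tendsto_ennrealI tendsto_mult tendsto_const C.Vk_lim)
  qed
  have nnT: "(\<integral>\<^sup>+w. Tinf A z 0 1 w \<partial>M.\<Omega>) = ennreal (tau0 * C.V 0 1)"
    using M.Tinf_lim sup by simp
  have f2: "(\<integral>\<^sup>+w. Tinf A z 0 1 w \<partial>M.\<Omega>) \<noteq> \<infinity>" unfolding nnT by simp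
  have fin: "AE w in M.\<Omega>. Tinf A z 0 1 w \<noteq> \<infinity>"
    by (rule nn_integral_PInf_AE[OF _ f2]) measurable
  have eqAE: "AE w in M.\<Omega>. ennreal (T' A z w) = Tinf A z 0 1 w \<and> 0 \<le> T' A z w"
    using fin
  proof eventually_elim
    case (elim w)
    then show ?case unfolding T'_Tinf by (simp add: ennreal_enn2real_if)
  qed
  have "(\<integral>\<^sup>+w. ennreal (T' A z w) \<partial>M.\<Omega>) = (\<integral>\<^sup>+w. Tinf A z 0 1 w \<partial>M.\<Omega>)"
    by (rule nn_integral_cong_AE) (use eqAE in \<open>auto elim: eventually_mono\<close>)
  also note nnT
  finally have "(\<integral>\<^sup>+w. ennreal (T' A z w) \<partial>M.\<Omega>) = ennreal (tau0 * C.V 0 1)" .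
  then have "integrable M.\<Omega> (T' A z) \<and> integral\<^sup>L M.\<Omega> (T' A z) = tau0 * C.V 0 1"
    using eqAE V0 assms(5)
    by (subst nn_integral_eq_integrable[symmetric]) (auto elim: eventually_mono intro: measurable_T')
  then have I: "(\<integral>\<omega>. T' A z \<omega> \<partial>mining_space q tau0) / tau0 = C.V 0 1"
    using assms(5) by (simp add: M.Omega_eq)
  show ?thesis unfolding I C.V01_formula C.lam_def assms(4) ..
qed

end
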